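(* Let $\mathfrak g_1,\mathfrak g_2$ be finite-dimensional complex Lie algebras. Then the Jordan–Kronecker invariants of $\mathfrak g_1\oplus\mathfrak g_2$ are the union (as multisets of Jordan tuples and Kronecker sizes) of the Jordan–Kronecker invariants of $\mathfrak g_1$ and of $\mathfrak g_2$; in particular Jordan tuples coming from $\mathfrak g_1$ and from $\mathfrak g_2$ correspond to different eigenvalues.
   Context: For a finite-dimensional complex Lie algebra $\mathfrak g$ and $x\in\mathfrak g^*$, let $\mathcal A_x$ be the skew form $(\xi,\eta)\mapsto\langle x,[\xi,\eta]\rangle$ on $\mathfrak g$. By the Jordan–Kronecker theorem, a pair of skew forms $A,B$ on a finite-dimensional complex vector space admits a basis in which both are block-diagonal with blocks of the types: Jordan $2n\times2n$ block with eigenvalue $\mu$ ($A_i=\begin{pmatrix}0&J_\mu\\-J_\mu^T&0\end{pmatrix}$, $B_i=\begin{pmatrix}0&I_n\\-I_n&0\end{pmatrix}$), Jordan block with eigenvalue $\infty$ (roles of $A_i,B_i$ swapped), or Kronecker $(2k-1)\times(2k-1)$ block ($k\ge1$; $A_i=\begin{pmatrix}0&P\\-P^T&0\end{pmatrix}$, $B_i=\begin{pmatrix}0&Q\\-Q^T&0\end{pmatrix}$, $P=(I_{k-1}|0)$, $Q=(0|I_{k-1})$); block numbers and sizes grouped by eigenvalue are unique. For $(x,a)$ in a nonempty Zariski open subset of $\mathfrak g^*\times\mathfrak g^*$ the pair $(\mathcal A_x,\mathcal A_a)$ has the same Kronecker sizes $2k_1-1,\dots,2k_q-1$ and the same multiset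 of Jordan tuples $J_{\lambda_i}(2n_{i1},\dots,2n_{is_i})$ (for each distinct eigenvalue $\lambda_i$, the sizes of the Jordan blocks with that eigenvalue, $n_{i1}\ge\dots\ge n_{is_i}$; the eigenvalues depend on $(x,a)$ and are regarded as distinct formal symbols). These are the Jordan–Kronecker (JK) invariants of $\mathfrak g$. *)

theory Defs
  imports "Jordan_Normal_Form.Jordan_Normal_Form" "HOL-Library.Multiset"
begin

text \<open>A Lie algebra of dimension n is given by its structure constants with respect to
  a basis e_0, ..., e_(n-1): [e_i, e_j] = sum over k < n of c i j k e_k.
  Values of c outside the index range are irrelevant.\<close>

definition lie_alg :: "nat \<Rightarrow> (nat \<Rightarrow> nat \<Rightarrow> nat \<Rightarrow> complex) \<Rightarrow> bool" where
  "lie_alg n c \<longleftrightarrow>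
     (\<forall>i<n. \<forall>k<n. c i i k = 0) \<and>
     (\<forall>i<n. \<forall>j<n. \<forall>k<n. c i j k = - c j i k) \<and>
     (\<forall>i<n. \<forall>j<n. \<forall>k<n. \<forall>m<n.
        (\<Sum>l<n. c i j l * c l k m + c j k l * c l i m + c k i l * c l j m) = 0)"

text \<open>Direct sum g1 + g2: basis of g1 (indices < n1) followed by basis of g2.\<close>
definition lie_dsum :: "nat \<Rightarrow> (nat \<Rightarrow> nat \<Rightarrow> nat \<Rightarrow> complex) \<Rightarrow> nat \<Rightarrow>
    (nat \<Rightarrow> nat \<Rightarrow> nat \<Rightarrow> complex) \<Rightarrow> (nat \<Rightarrow> nat \<Rightarrow> nat \<Rightarrow> complex)" where
  "lie_dsum n1 c1 n2 c2 = (\<lambda>i j k.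
     if i < n1 \<and> j < n1 \<and> k < n1 then c1 i j k
     else if n1 \<le> i \<and> n1 \<le> j \<and> n1 \<le> k \<and> i < n1 + n2 \<and> j < n1 + n2 \<and> k < n1 + n2
       then c2 (i - n1) (j - n1) (k - n1)
     else 0)"

text \<open>For x in g* (coordinates in the dual basis), the skew form A_x(xi,eta) = <x,[xi,eta]>,
  as a Gram matrix in the basis e_i.\<close>
definition coadj_form :: "nat \<Rightarrow> (nat \<Rightarrow> nat \<Rightarrow> nat \<Rightarrow> complex) \<Rightarrow> complex vec \<Rightarrow> complex mat" where
  "coadj_form n c x = mat n n (\<lambda>(i,j). \<Sum>k<n. x $ k * c i j k)"

datatype jkblock =
    Kron nat             \<comment> \<open>Kronecker block of size 2k-1\<close>
  | Jord complex nat     \<comment> \<open>Jordan block of size 2m, eigenvalue mu\<close>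
  | JordInf nat          \<comment> \<open>Jordan block of size 2m, eigenvalue infinity\<close>

fun jk_valid :: "jkblock \<Rightarrow> bool" where
  "jk_valid (Kron k) = (k \<ge> 1)"
| "jk_valid (Jord \<mu> m) = (m \<ge> 1)"
| "jk_valid (JordInf m) = (m \<ge> 1)"

definition skew_blk :: "complex mat \<Rightarrow> complex mat" where
  "skew_blk M = four_block_mat (0\<^sub>m (dim_row M) (dim_row M)) M
                               (- transpose_mat M) (0\<^sub>m (dim_col M) (dim_col M))"

definition kron_P :: "nat \<Rightarrow> complex mat" where
  "kron_P k = mat (k - 1) k (\<lambda>(i,j). if j = i then 1 else 0)"

definition kron_Q :: "nat \<Rightarrow> complex mat" where
  "kron_Q k = mat (k - 1) k (\<lambda>(i,j). if j = Suc i then 1 else 0)"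

fun blkA :: "jkblock \<Rightarrow> complex mat" where
  "blkA (Kron k) = skew_blk (kron_P k)"
| "blkA (Jord \<mu> m) = skew_blk (jordan_block m \<mu>)"
| "blkA (JordInf m) = skew_blk (1\<^sub>m m)"

fun blkB :: "jkblock \<Rightarrow> complex mat" where
  "blkB (Kron k) = skew_blk (kron_Q k)"
| "blkB (Jord \<mu> m) = skew_blk (1\<^sub>m m)"
| "blkB (JordInf m) = skew_blk (jordan_block m 0)"

fun blkdiag :: "complex mat list \<Rightarrow> complex mat" where
  "blkdiag [] = 0\<^sub>m 0 0"
| "blkdiag (M # Ms) = (let R = blkdiag Ms in
     four_block_mat M (0\<^sub>m (dim_row M) (dim_col R)) (0\<^sub>m (dim_row R) (dim_col M)) R)"

definition JK_decomp :: "complex mat \<Rightarrow> complex mat \<Rightarrow> jkblock list \<Rightarrow> bool" where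
  "JK_decomp A B bl \<longleftrightarrow>
     (\<forall>b\<in>set bl. jk_valid b) \<and>
     (\<exists>P. P \<in> carrier_mat (dim_row A) (dim_row A) \<and> invertible_mat P \<and>
          transpose_mat P * A * P = blkdiag (map blkA bl) \<and>
          transpose_mat P * B * P = blkdiag (map blkB bl))"

fun kron_k :: "jkblock \<Rightarrow> nat option" where
  "kron_k (Kron k) = Some k"
| "kron_k _ = None"

text \<open>Eigenvalue of a Jordan block: Some mu for finite mu, None for infinity.\<close>
fun jord_ev :: "jkblock \<Rightarrow> complex option option" where
  "jord_ev (Kron k) = None"
| "jord_ev (Jord \<mu> m) = Some (Some \<mu>)"
| "jord_ev (JordInf m) = Some None"

fun jord_size :: "jkblock \<Rightarrow> nat" where
  "jord_size (Kron k) = 0"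
| "jord_size (Jord \<mu> m) = m"
| "jord_size (JordInf m) = m"

text \<open>Kronecker invariant: multiset of the k_i (block sizes 2k_i - 1).\<close>
definition kron_inv :: "jkblock list \<Rightarrow> nat multiset" where
  "kron_inv bl = mset (List.map_filter kron_k bl)"

text \<open>Jordan invariant: for each distinct eigenvalue, the Jordan tuple
  (multiset of the n_ij, block sizes 2 n_ij); the eigenvalues themselves are forgotten.\<close>
definition jord_inv :: "jkblock list \<Rightarrow> nat multiset multiset" where
  "jord_inv bl = image_mset (\<lambda>e. mset (map jord_size (filter (\<lambda>b. jord_ev b = Some e) bl)))
                            (mset_set (set (List.map_filter jord_ev bl)))"

definition has_JK_type :: "complex mat \<Rightarrow> complex mat \<Rightarrow> nat multiset \<Rightarrow> nat multiset multiset \<Rightarrow> bool" where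
  "has_JK_type A B K J \<longleftrightarrow> (\<exists>bl. JK_decomp A B bl \<and> kron_inv bl = K \<and> jord_inv bl = J)"

text \<open>Polynomial functions on g* x g* = C^n x C^n (points are pairs of vectors of dimension n).\<close>
inductive_set polyfun :: "nat \<Rightarrow> (complex vec \<times> complex vec \<Rightarrow> complex) set" for n where
  pf_const: "(\<lambda>_. c) \<in> polyfun n"
| pf_var1: "i < n \<Longrightarrow> (\<lambda>(x,a). x $ i) \<in> polyfun n"
| pf_var2: "i < n \<Longrightarrow> (\<lambda>(x,a). a $ i) \<in> polyfun n"
| pf_add: "f \<in> polyfun n \<Longrightarrow> g \<in> polyfun n \<Longrightarrow> (\<lambda>p. f p + g p) \<in> polyfun n"
| pf_mult: "f \<in> polyfun n \<Longrightarrow> g \<in> polyfun n \<Longrightarrow> (\<lambda>p. f p * g p) \<in> polyfun n"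

definition zariski_open :: "nat \<Rightarrow> (complex vec \<times> complex vec) set \<Rightarrow> bool" where
  "zariski_open n U \<longleftrightarrow> (\<exists>S \<subseteq> polyfun n.
     U = {(x,a). dim_vec x = n \<and> dim_vec a = n \<and> (\<exists>f\<in>S. f (x,a) \<noteq> 0)})"

definition JK_invariants :: "nat \<Rightarrow> (nat \<Rightarrow> nat \<Rightarrow> nat \<Rightarrow> complex) \<Rightarrow>
    nat multiset \<Rightarrow> nat multiset multiset \<Rightarrow> bool" where
  "JK_invariants n c K J \<longleftrightarrow> (\<exists>U. zariski_open n U \<and> U \<noteq> {} \<and>
     (\<forall>(x,a)\<in>U. has_JK_type (coadj_form n c x) (coadj_form n c a) K J))"

end

theory Submission
  imports Defs "Subresultants.Subresultant_Gcd" "HOL-Computational_Algebra.Fundamental_Theorem_Algebra"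
    "HOL-Computational_Algebra.Field_as_Ring"
begin
lemma pf_c: "(\<lambda>_. c) \<in> polyfun n" by (rule pf_const)

lemma pf_add': "f \<in> polyfun n \<Longrightarrow> g \<in> polyfun n \<Longrightarrow> (\<lambda>p. f p + g p) \<in> polyfun n"
  by (rule pf_add)

lemma pf_mult': "f \<in> polyfun n \<Longrightarrow> g \<in> polyfun n \<Longrightarrow> (\<lambda>p. f p * g p) \<in> polyfun n"
  by (rule pf_mult)

lemma pf_neg: "f \<in> polyfun n \<Longrightarrow> (\<lambda>p. - f p) \<in> polyfun n"
proof -
  assume "f \<in> polyfun n"
  from pf_mult[OF pf_const[of "-1"] this] show ?thesis by simp
qed

lemma pf_sub: "f \<in> polyfun n \<Longrightarrow> g \<in> polyfun n \<Longrightarrow> (\<lambda>p. f p - g p) \<in> polyfun n"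
  using pf_add[OF _ pf_neg, of f n g] by simp

lemma pf_sum: "finite S \<Longrightarrow> (\<And>i. i \<in> S \<Longrightarrow> (\<lambda>p. f i p) \<in> polyfun n) \<Longrightarrow> (\<lambda>p. \<Sum>i\<in>S. f i p) \<in> polyfun n"
proof (induction S rule: finite_induct)
  case empty
  then show ?case using pf_const[of 0] by simp
next
  case (insert x F)
  then show ?case using pf_add[of "\<lambda>p. f x p" n "\<lambda>p. \<Sum>i\<in>F. f i p"] by simp
qed

lemma pf_prod: "finite S \<Longrightarrow> (\<And>i. i \<in> S \<Longrightarrow> (\<lambda>p. f i p) \<in> polyfun n) \<Longrightarrow> (\<lambda>p. \<Prod>i\<in>S. f i p) \<in> polyfun n"
proof (induction S rule: finite_induct)
  case empty
  then show ?case using pf_const[of 1] by simp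
next
  case (insert x F)
  then show ?case using pf_mult[of "\<lambda>p. f x p" n "\<lambda>p. \<Prod>i\<in>F. f i p"] by simp
qed

lemma pf_det: assumes "\<And>p. M p \<in> carrier_mat m m"
  and "\<And>i j. i < m \<Longrightarrow> j < m \<Longrightarrow> (\<lambda>p. M p $$ (i,j)) \<in> polyfun n"
  shows "(\<lambda>p. det (M p)) \<in> polyfun n"
proof -
  have "(\<lambda>p. det (M p)) = (\<lambda>p. \<Sum>\<pi> \<in> {\<pi>. \<pi> permutes {0..<m}}. of_int (sign \<pi>) * (\<Prod>i=0..<m. M p $$ (i, \<pi> i)))"
  proof (rule ext)
    fix p have "dim_row (M p) = m" "dim_col (M p) = m" using assms(1)[of p] by auto
    then show "det (M p) = (\<Sum>\<pi> \<in> {\<pi>. \<pi> permutes {0..<m}}. of_int (sign \<pi>) * (\<Prod>i=0..<m. M p $$ (i, \<pi> i)))"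
      by (simp add: det_def)
  qed
  also have "\<dots> \<in> polyfun n"
  proof (rule pf_sum)
    show "finite {\<pi>. \<pi> permutes {0..<m}}" by (simp add: finite_permutations)
    fix \<pi> assume "\<pi> \<in> {\<pi>. \<pi> permutes {0..<m}}"
    then have pi: "\<pi> permutes {0..<m}" by simp
    show "(\<lambda>p. of_int (sign \<pi>) * (\<Prod>i=0..<m. M p $$ (i, \<pi> i))) \<in> polyfun n"
      apply (rule pf_mult[OF pf_const])
      apply (rule pf_prod, simp)
      apply (rule assms(2))
      using pi permutes_in_image by fastforce+
  qed
  finally show ?thesis .
qed

definition PC :: "nat \<Rightarrow> (complex vec \<times> complex vec \<Rightarrow> complex poly) \<Rightarrow> bool" where
  "PC n F \<longleftrightarrow> (\<forall>k. (\<lambda>p. coeff (F p) k) \<in> polyfun n)"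

lemma PC_add: "PC n F \<Longrightarrow> PC n G \<Longrightarrow> PC n (\<lambda>p. F p + G p)"
  unfolding PC_def by (auto intro: pf_add)

lemma PC_mult: "PC n F \<Longrightarrow> PC n G \<Longrightarrow> PC n (\<lambda>p. F p * G p)"
  unfolding PC_def coeff_mult
  by (auto intro!: pf_sum pf_mult)

lemma PC_sum: "finite S \<Longrightarrow> (\<And>i. i \<in> S \<Longrightarrow> PC n (\<lambda>p. f i p)) \<Longrightarrow> PC n (\<lambda>p. \<Sum>i\<in>S. f i p)"
  unfolding PC_def coeff_sum by (auto intro!: pf_sum)

lemma PC_const: "PC n (\<lambda>_. c)"
  unfolding PC_def by (auto intro: pf_const)

lemma PC_prod: "finite S \<Longrightarrow> (\<And>i. i \<in> S \<Longrightarrow> PC n (\<lambda>p. f i p)) \<Longrightarrow> PC n (\<lambda>p. \<Prod>i\<in>S. f i p)"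
proof (induction S rule: finite_induct)
  case empty
  then show ?case using PC_const[of n 1] by simp
next
  case (insert x F)
  then show ?case using PC_mult[of n "\<lambda>p. f x p" "\<lambda>p. \<Prod>i\<in>F. f i p"] by simp
qed

lemma PC_det: assumes "\<And>p. M p \<in> carrier_mat m m"
  and "\<And>i j. i < m \<Longrightarrow> j < m \<Longrightarrow> PC n (\<lambda>p. M p $$ (i,j))"
  shows "PC n (\<lambda>p. det (M p))"
proof -
  have "(\<lambda>p. det (M p)) = (\<lambda>p. \<Sum>\<pi> \<in> {\<pi>. \<pi> permutes {0..<m}}. of_int (sign \<pi>) * (\<Prod>i=0..<m. M p $$ (i, \<pi> i)))"
  proof (rule ext)
    fix p have "dim_row (M p) = m" "dim_col (M p) = m" using assms(1)[of p] by auto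
    then show "det (M p) = (\<Sum>\<pi> \<in> {\<pi>. \<pi> permutes {0..<m}}. of_int (sign \<pi>) * (\<Prod>i=0..<m. M p $$ (i, \<pi> i)))"
      by (simp add: det_def)
  qed
  moreover have "PC n \<dots>"
  proof (rule PC_sum)
    show "finite {\<pi>. \<pi> permutes {0..<m}}" by (simp add: finite_permutations)
    fix \<pi> assume "\<pi> \<in> {\<pi>. \<pi> permutes {0..<m}}"
    then have pi: "\<pi> permutes {0..<m}" by simp
    show "PC n (\<lambda>p. of_int (sign \<pi>) * (\<Prod>i=0..<m. M p $$ (i, \<pi> i)))"
      apply (rule PC_mult[OF PC_const])
      apply (rule PC_prod, simp)
      apply (rule assms(2))
      using pi permutes_in_image by fastforce+
  qed
  ultimately show ?thesis by simp
qed

lemma PC_lin: "u \<in> polyfun n \<Longrightarrow> v \<in> polyfun n \<Longrightarrow> PC n (\<lambda>p. [:u p, v p:])"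
  unfolding PC_def
proof
  fix k assume u: "u \<in> polyfun n" and v: "v \<in> polyfun n"
  show "(\<lambda>p. coeff [:u p, v p:] k) \<in> polyfun n"
  proof (cases k)
    case 0 then show ?thesis using u by simp
  next
    case (Suc k') then show ?thesis using v pf_const[of 0 n] by (cases k', auto)
  qed
qed

lemma pf_pull:
  assumes "f \<in> polyfun m"
    and "\<And>i. i < m \<Longrightarrow> (\<lambda>p. fst (\<sigma> p) $ i) \<in> polyfun n"
    and "\<And>i. i < m \<Longrightarrow> (\<lambda>p. snd (\<sigma> p) $ i) \<in> polyfun n"
  shows "(\<lambda>p. f (\<sigma> p)) \<in> polyfun n"
  using assms(1)
proof (induction rule: polyfun.induct)
  case (pf_const c) then show ?case by (rule polyfun.pf_const)
next
  case (pf_var1 i) then show ?case using assms(2) by (simp add: split_beta)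
next
  case (pf_var2 i) then show ?case using assms(3) by (simp add: split_beta)
next
  case (pf_add f g) then show ?case using polyfun.pf_add by blast
next
  case (pf_mult f g) then show ?case using polyfun.pf_mult by blast
qed

definition line_pt :: "nat \<Rightarrow> complex vec \<times> complex vec \<Rightarrow> complex vec \<times> complex vec \<Rightarrow> complex \<Rightarrow> complex vec \<times> complex vec" where
  "line_pt n p0 p1 t = (vec n (\<lambda>i. fst p0 $ i + t * (fst p1 $ i - fst p0 $ i)),
                        vec n (\<lambda>i. snd p0 $ i + t * (snd p1 $ i - snd p0 $ i)))"

lemma pf_line: "f \<in> polyfun n \<Longrightarrow> \<exists>Q. \<forall>t. f (line_pt n p0 p1 t) = poly Q t"
proof (induction rule: polyfun.induct)
  case (pf_const c) then show ?case by (intro exI[of _ "[:c:]"], simp)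
next
  case (pf_var1 i) then show ?case
    by (intro exI[of _ "[:fst p0 $ i, fst p1 $ i - fst p0 $ i:]"], simp add: line_pt_def algebra_simps)
next
  case (pf_var2 i) then show ?case
    by (intro exI[of _ "[:snd p0 $ i, snd p1 $ i - snd p0 $ i:]"], simp add: line_pt_def algebra_simps)
next
  case (pf_add f g)
  then obtain Q1 Q2 where "\<forall>t. f (line_pt n p0 p1 t) = poly Q1 t" "\<forall>t. g (line_pt n p0 p1 t) = poly Q2 t" by blast
  then show ?case by (intro exI[of _ "Q1 + Q2"], simp)
next
  case (pf_mult f g)
  then obtain Q1 Q2 where "\<forall>t. f (line_pt n p0 p1 t) = poly Q1 t" "\<forall>t. g (line_pt n p0 p1 t) = poly Q2 t" by blast
  then show ?case by (intro exI[of _ "Q1 * Q2"], simp)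
qed

definition ptdim :: "nat \<Rightarrow> complex vec \<times> complex vec \<Rightarrow> bool" where
  "ptdim n p \<longleftrightarrow> dim_vec (fst p) = n \<and> dim_vec (snd p) = n"

lemma line_pt_0: "ptdim n p0 \<Longrightarrow> line_pt n p0 p1 0 = p0"
  unfolding line_pt_def ptdim_def by (cases p0, auto intro!: eq_vecI)

lemma line_pt_1: "ptdim n p1 \<Longrightarrow> line_pt n p0 p1 1 = p1"
  unfolding line_pt_def ptdim_def by (cases p1, auto intro!: eq_vecI)

lemma line_pt_dim: "ptdim n (line_pt n p0 p1 t)"
  unfolding line_pt_def ptdim_def by auto

lemma pf_prod_nz:
  assumes f: "f \<in> polyfun n" and g: "g \<in> polyfun n"
    and p0: "ptdim n p0" "f p0 \<noteq> 0" and p1: "ptdim n p1" "g p1 \<noteq> 0"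
  shows "\<exists>p. ptdim n p \<and> f p \<noteq> 0 \<and> g p \<noteq> 0"
proof -
  obtain Q1 where Q1: "\<forall>t. f (line_pt n p0 p1 t) = poly Q1 t" using pf_line[OF f] by blast
  obtain Q2 where Q2: "\<forall>t. g (line_pt n p0 p1 t) = poly Q2 t" using pf_line[OF g] by blast
  have "poly Q1 0 \<noteq> 0" using Q1 p0 line_pt_0[OF p0(1)] by metis
  then have "Q1 \<noteq> 0" by auto
  have "poly Q2 1 \<noteq> 0" using Q2 p1 line_pt_1[OF p1(1)] by metis
  then have "Q2 \<noteq> 0" by auto
  then have "Q1 * Q2 \<noteq> 0" using \<open>Q1 \<noteq> 0\<close> by auto
  then have "finite {t. poly (Q1 * Q2) t = 0}" by (rule poly_roots_finite)
  then obtain t where "t \<notin> {t. poly (Q1 * Q2) t = 0}"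
    using ex_new_if_finite[OF infinite_UNIV_char_0] by blast
  then have "poly Q1 t \<noteq> 0" "poly Q2 t \<noteq> 0" by auto
  then show ?thesis using Q1 Q2 line_pt_dim by metis
qed

lemma blkdiag_dim_row[simp]: "dim_row (blkdiag Ms) = sum_list (map dim_row Ms)"
  by (induction Ms) (simp_all add: Let_def)
lemma blkdiag_dim_col[simp]: "dim_col (blkdiag Ms) = sum_list (map dim_col Ms)"
  by (induction Ms) (simp_all add: Let_def)

lemma blkdiag_carrier: "blkdiag Ms \<in> carrier_mat (sum_list (map dim_row Ms)) (sum_list (map dim_col Ms))"
  by (rule carrier_matI) simp_all
lemma carrier_self: "M \<in> carrier_mat (dim_row M) (dim_col M)" by (rule carrier_matI) simp_all

lemma blkdiag_Cons: "blkdiag (M # Ms) = four_block_mat M (0\<^sub>m (dim_row M) (dim_col (blkdiag Ms))) (0\<^sub>m (dim_row (blkdiag Ms)) (dim_col M)) (blkdiag Ms)"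
  by (simp add: Let_def)

declare blkdiag.simps(2)[simp del]

lemma blkdiag_map_mult:
  fixes f g :: "'b \<Rightarrow> complex mat"
  assumes "\<And>b. b \<in> set bl \<Longrightarrow> dim_col (f b) = dim_row (g b)"
  shows "blkdiag (map f bl) * blkdiag (map g bl) = blkdiag (map (\<lambda>b. f b * g b) bl)"
  using assms
proof (induction bl)
  case Nil then show ?case by simp
next
  case (Cons b bl)
  let ?F = "blkdiag (map f bl)" and ?G = "blkdiag (map g bl)"
  have IH: "?F * ?G = blkdiag (map (\<lambda>b. f b * g b) bl)" using Cons by auto
  have eq: "sum_list (map (\<lambda>b. dim_col (f b)) bl) = sum_list (map (\<lambda>b. dim_row (g b)) bl)"
    using Cons.prems by (intro arg_cong[where f=sum_list] map_cong) auto
  have dfg: "dim_col (f b) = dim_row (g b)" using Cons.prems by auto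
  have eqG: "dim_row ?G = dim_col ?F" using eq by (simp add: o_def)
  have c1: "f b \<in> carrier_mat (dim_row (f b)) (dim_col (f b))" by auto
  have c2: "?F \<in> carrier_mat (dim_row ?F) (dim_col ?F)" by auto
  have c3: "g b \<in> carrier_mat (dim_col (f b)) (dim_col (g b))" using dfg by auto
  have c4: "?G \<in> carrier_mat (dim_col ?F) (dim_col ?G)" using eq by (auto simp: o_def)
  have "blkdiag (map f (b # bl)) * blkdiag (map g (b # bl)) =
    four_block_mat (f b) (0\<^sub>m (dim_row (f b)) (dim_col ?F)) (0\<^sub>m (dim_row ?F) (dim_col (f b))) ?F *
    four_block_mat (g b) (0\<^sub>m (dim_col (f b)) (dim_col ?G)) (0\<^sub>m (dim_col ?F) (dim_col (g b))) ?G"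
    unfolding list.map blkdiag_Cons dfg[symmetric] eqG ..
  also have "\<dots> = four_block_mat (f b * g b + 0\<^sub>m (dim_row (f b)) (dim_col ?F) * 0\<^sub>m (dim_col ?F) (dim_col (g b)))
      (f b * 0\<^sub>m (dim_col (f b)) (dim_col ?G) + 0\<^sub>m (dim_row (f b)) (dim_col ?F) * ?G)
      (0\<^sub>m (dim_row ?F) (dim_col (f b)) * g b + ?F * 0\<^sub>m (dim_col ?F) (dim_col (g b)))
      (0\<^sub>m (dim_row ?F) (dim_col (f b)) * 0\<^sub>m (dim_col (f b)) (dim_col ?G) + ?F * ?G)"
    by (rule mult_four_block_mat[OF c1 _ _ c2 c3 _ _ c4], auto)
  also have "\<dots> = four_block_mat (f b * g b) (0\<^sub>m (dim_row (f b)) (dim_col ?G)) (0\<^sub>m (dim_row ?F) (dim_col (g b))) (?F * ?G)"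
  proof -
    have z1: "0\<^sub>m (dim_row (f b)) (dim_col ?F) * 0\<^sub>m (dim_col ?F) (dim_col (g b)) = 0\<^sub>m (dim_row (f b)) (dim_col (g b))"
      by (rule left_mult_zero_mat, auto)
    have z2: "f b * 0\<^sub>m (dim_col (f b)) (dim_col ?G) = 0\<^sub>m (dim_row (f b)) (dim_col ?G)"
      by (rule right_mult_zero_mat[OF c1])
    have z3: "0\<^sub>m (dim_row (f b)) (dim_col ?F) * ?G = 0\<^sub>m (dim_row (f b)) (dim_col ?G)"
      by (rule left_mult_zero_mat[OF c4])
    have z4: "0\<^sub>m (dim_row ?F) (dim_col (f b)) * g b = 0\<^sub>m (dim_row ?F) (dim_col (g b))"
      by (rule left_mult_zero_mat[OF c3])
    have z5: "?F * 0\<^sub>m (dim_col ?F) (dim_col (g b)) = 0\<^sub>m (dim_row ?F) (dim_col (g b))"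
      by (rule right_mult_zero_mat[OF c2])
    have z6: "0\<^sub>m (dim_row ?F) (dim_col (f b)) * 0\<^sub>m (dim_col (f b)) (dim_col ?G) = 0\<^sub>m (dim_row ?F) (dim_col ?G)"
      by (rule left_mult_zero_mat, auto)
    have a1: "f b * g b + 0\<^sub>m (dim_row (f b)) (dim_col (g b)) = f b * g b"
      by (rule right_add_zero_mat, auto)
    have a2: "(0\<^sub>m (dim_row (f b)) (dim_col ?G) :: complex mat) + 0\<^sub>m (dim_row (f b)) (dim_col ?G) = 0\<^sub>m (dim_row (f b)) (dim_col ?G)"
      by (intro eq_matI, auto)
    have a3: "(0\<^sub>m (dim_row ?F) (dim_col (g b)) :: complex mat) + 0\<^sub>m (dim_row ?F) (dim_col (g b)) = 0\<^sub>m (dim_row ?F) (dim_col (g b))"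
      by (intro eq_matI, auto)
    have a4: "0\<^sub>m (dim_row ?F) (dim_col ?G) + ?F * ?G = ?F * ?G"
      by (rule left_add_zero_mat, auto)
    show ?thesis unfolding z1 z2 z3 z4 z5 z6 a1 a2 a3 a4 ..
  qed
  also have "\<dots> = four_block_mat (f b * g b) (0\<^sub>m (dim_row (f b * g b)) (dim_col (?F * ?G))) (0\<^sub>m (dim_row (?F * ?G)) (dim_col (f b * g b))) (?F * ?G)"
    by simp
  also have "\<dots> = blkdiag (map (\<lambda>b. f b * g b) (b # bl))"
    unfolding IH list.map blkdiag_Cons ..
  finally show ?case .
qed


lemma zero_add_zero: "(0\<^sub>m a b :: complex mat) + 0\<^sub>m a b = 0\<^sub>m a b" by (intro eq_matI) auto

lemma four_block_diag_assoc:
  fixes A B C :: "complex mat"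
  assumes "A \<in> carrier_mat a a'" "B \<in> carrier_mat b b'" "C \<in> carrier_mat c c'"
  shows "four_block_mat A (0\<^sub>m a (b'+c')) (0\<^sub>m (b+c) a') (four_block_mat B (0\<^sub>m b c') (0\<^sub>m c b') C)
  = four_block_mat (four_block_mat A (0\<^sub>m a b') (0\<^sub>m b a') B) (0\<^sub>m (a+b) c') (0\<^sub>m c (a'+b')) C"
  apply (rule eq_matI)
  using assms apply (simp_all add: index_mat_four_block)
  apply (intro impI conjI)
  apply (auto simp: index_mat_four_block)
  done

lemma blkdiag_map_add:
  fixes f g :: "'b \<Rightarrow> complex mat"
  assumes "\<And>b. b \<in> set bl \<Longrightarrow> dim_row (f b) = dim_row (g b) \<and> dim_col (f b) = dim_col (g b)"
  shows "blkdiag (map f bl) + blkdiag (map g bl) = blkdiag (map (\<lambda>b. f b + g b) bl)"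
  using assms
proof (induction bl)
  case Nil then show ?case by (intro eq_matI) auto
next
  case (Cons b bl)
  let ?F = "blkdiag (map f bl)" and ?G = "blkdiag (map g bl)"
  have IH: "?F + ?G = blkdiag (map (\<lambda>b. f b + g b) bl)" using Cons by auto
  have er: "sum_list (map (\<lambda>b. dim_row (f b)) bl) = sum_list (map (\<lambda>b. dim_row (g b)) bl)"
    using Cons.prems by (intro arg_cong[where f=sum_list] map_cong) auto
  have ec: "sum_list (map (\<lambda>b. dim_col (f b)) bl) = sum_list (map (\<lambda>b. dim_col (g b)) bl)"
    using Cons.prems by (intro arg_cong[where f=sum_list] map_cong) auto
  have d: "dim_row (f b) = dim_row (g b)" "dim_col (f b) = dim_col (g b)" using Cons.prems by auto
  have dr: "dim_row ?G = dim_row ?F" "dim_col ?G = dim_col ?F" using er ec by (simp_all add: o_def)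
  have "blkdiag (map f (b # bl)) + blkdiag (map g (b # bl)) =
    four_block_mat (f b) (0\<^sub>m (dim_row (f b)) (dim_col ?F)) (0\<^sub>m (dim_row ?F) (dim_col (f b))) ?F +
    four_block_mat (g b) (0\<^sub>m (dim_row (f b)) (dim_col ?F)) (0\<^sub>m (dim_row ?F) (dim_col (f b))) ?G"
    unfolding list.map blkdiag_Cons d dr ..
  also have "\<dots> = four_block_mat (f b + g b) (0\<^sub>m (dim_row (f b)) (dim_col ?F) + 0\<^sub>m (dim_row (f b)) (dim_col ?F))
     (0\<^sub>m (dim_row ?F) (dim_col (f b)) + 0\<^sub>m (dim_row ?F) (dim_col (f b))) (?F + ?G)"
    by (rule add_four_block_mat[OF carrier_self _ _ carrier_self], insert d dr, auto intro!: carrier_matI)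
  also have "\<dots> = four_block_mat (f b + g b) (0\<^sub>m (dim_row (f b + g b)) (dim_col (?F + ?G)))
     (0\<^sub>m (dim_row (?F + ?G)) (dim_col (f b + g b))) (?F + ?G)"
    unfolding zero_add_zero index_add_mat d dr ..
  also have "\<dots> = blkdiag (map (\<lambda>b. f b + g b) (b # bl))"
    unfolding IH list.map blkdiag_Cons ..
  finally show ?case .
qed

lemma blkdiag_smult:
  fixes Ms :: "complex mat list"
  shows "a \<cdot>\<^sub>m blkdiag Ms = blkdiag (map (\<lambda>M. a \<cdot>\<^sub>m M) Ms)"
proof (induction Ms)
  case Nil then show ?case by (intro eq_matI) auto
next
  case (Cons M Ms)
  have "a \<cdot>\<^sub>m blkdiag (M # Ms) = four_block_mat (a \<cdot>\<^sub>m M) (a \<cdot>\<^sub>m 0\<^sub>m (dim_row M) (dim_col (blkdiag Ms)))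
     (a \<cdot>\<^sub>m 0\<^sub>m (dim_row (blkdiag Ms)) (dim_col M)) (a \<cdot>\<^sub>m blkdiag Ms)"
    unfolding blkdiag_Cons by (rule smult_four_block_mat[OF carrier_self _ _ carrier_self], auto)
  also have "\<dots> = four_block_mat (a \<cdot>\<^sub>m M) (0\<^sub>m (dim_row (a \<cdot>\<^sub>m M)) (dim_col (a \<cdot>\<^sub>m blkdiag Ms)))
     (0\<^sub>m (dim_row (a \<cdot>\<^sub>m blkdiag Ms)) (dim_col (a \<cdot>\<^sub>m M))) (a \<cdot>\<^sub>m blkdiag Ms)"
    by simp
  also have "\<dots> = blkdiag (map (\<lambda>M. a \<cdot>\<^sub>m M) (M # Ms))"
    unfolding Cons list.map blkdiag_Cons ..
  finally show ?case .
qed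

lemma blkdiag_det:
  fixes Ms :: "complex mat list"
  assumes "\<And>M. M \<in> set Ms \<Longrightarrow> dim_row M = dim_col M"
  shows "det (blkdiag Ms) = prod_list (map det Ms)"
  using assms
proof (induction Ms)
  case Nil then show ?case by (simp add: det_def)
next
  case (Cons M Ms)
  have sq: "dim_row (blkdiag Ms) = dim_col (blkdiag Ms)"
    using Cons.prems by (simp, intro arg_cong[where f=sum_list] map_cong, auto)
  have "det (blkdiag (M # Ms)) = det M * det (blkdiag Ms)"
    unfolding blkdiag_Cons
    by (rule det_four_block_mat_lower_left_zero, insert Cons.prems sq, auto intro!: carrier_matI)
  then show ?case using Cons by simp
qed

lemma blkdiag_append:
  fixes Ms Ns :: "complex mat list"
  shows "blkdiag (Ms @ Ns) = four_block_mat (blkdiag Ms) (0\<^sub>m (dim_row (blkdiag Ms)) (dim_col (blkdiag Ns)))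
     (0\<^sub>m (dim_row (blkdiag Ns)) (dim_col (blkdiag Ms))) (blkdiag Ns)"
proof (induction Ms)
  case Nil then show ?case by (intro eq_matI) auto
next
  case (Cons M Ms)
  show ?case unfolding append_Cons blkdiag_Cons Cons index_mat_four_block(2-3)
    by (rule four_block_diag_assoc[OF carrier_self carrier_self carrier_self])
qed

lemma blkdiag_zero:
  fixes Ms :: "complex mat list"
  assumes "\<And>M. M \<in> set Ms \<Longrightarrow> M = 0\<^sub>m (dim_row M) (dim_col M)"
  shows "blkdiag Ms = 0\<^sub>m (dim_row (blkdiag Ms)) (dim_col (blkdiag Ms))"
  using assms
proof (induction Ms)
  case Nil then show ?case by (intro eq_matI) auto
next
  case (Cons M Ms)
  then have "M = 0\<^sub>m (dim_row M) (dim_col M)" "blkdiag Ms = 0\<^sub>m (dim_row (blkdiag Ms)) (dim_col (blkdiag Ms))" by auto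
  then have "blkdiag (M # Ms) = four_block_mat (0\<^sub>m (dim_row M) (dim_col M)) (0\<^sub>m (dim_row M) (dim_col (blkdiag Ms)))
    (0\<^sub>m (dim_row (blkdiag Ms)) (dim_col M)) (0\<^sub>m (dim_row (blkdiag Ms)) (dim_col (blkdiag Ms)))"
    unfolding blkdiag_Cons by metis
  then show ?case by simp
qed

lemma blkdiag_one:
  fixes Ms :: "complex mat list"
  assumes "\<And>M. M \<in> set Ms \<Longrightarrow> M = 1\<^sub>m (dim_row M)"
  shows "blkdiag Ms = 1\<^sub>m (dim_row (blkdiag Ms))"
  using assms
proof (induction Ms)
  case Nil then show ?case by (intro eq_matI) auto
next
  case (Cons M Ms)
  then have a: "M = 1\<^sub>m (dim_row M)" and b: "blkdiag Ms = 1\<^sub>m (dim_row (blkdiag Ms))" by auto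
  have "blkdiag (M # Ms) = four_block_mat (1\<^sub>m (dim_row M)) (0\<^sub>m (dim_row M) (dim_row (blkdiag Ms)))
      (0\<^sub>m (dim_row (blkdiag Ms)) (dim_row M)) (1\<^sub>m (dim_row (blkdiag Ms)))"
    unfolding blkdiag_Cons by (subst a, subst (2) a, subst (4) a, subst b, subst (2) b, subst (4) b) simp
  also have "\<dots> = 1\<^sub>m (dim_row M + dim_row (blkdiag Ms))" by simp
  finally show ?case by simp
qed

lemma zero_mat_mult_vec': "v \<in> carrier_vec nc \<Longrightarrow> (0\<^sub>m nr nc :: complex mat) *\<^sub>v v = 0\<^sub>v nr"
  by (intro eq_vecI) (auto simp: scalar_prod_def)

lemma mat_mult_zero_vec': "A \<in> carrier_mat nr nc \<Longrightarrow> (A :: complex mat) *\<^sub>v 0\<^sub>v nc = 0\<^sub>v nr"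
  by (intro eq_vecI) (auto simp: scalar_prod_def)

lemma mult_delta_right:
  fixes S :: "complex mat"
  assumes S: "S \<in> carrier_mat r n" and g: "\<And>j. j < c \<Longrightarrow> g j < n"
  shows "S * mat n c (\<lambda>(i,j). if i = g j then 1 else 0) = mat r c (\<lambda>(i,j). S $$ (i, g j))"
proof (rule eq_matI)
  fix i j assume i: "i < dim_row (mat r c (\<lambda>(i,j). S $$ (i, g j)))" and j: "j < dim_col (mat r c (\<lambda>(i,j). S $$ (i, g j)))"
  then have ij: "i < r" "j < c" by auto
  have "(S * mat n c (\<lambda>(i,j). if i = g j then 1 else 0)) $$ (i,j) = (\<Sum>l<n. S $$ (i,l) * (if l = g j then 1 else 0))"
    using S ij by (auto simp: scalar_prod_def atLeast0LessThan)
  also have "\<dots> = (\<Sum>l<n. if l = g j then S $$ (i,l) else 0)" by (intro sum.cong) auto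
  also have "\<dots> = S $$ (i, g j)" using g[OF ij(2)] by (simp add: sum.delta')
  finally show "(S * mat n c (\<lambda>(i,j). if i = g j then 1 else 0)) $$ (i,j) = mat r c (\<lambda>(i,j). S $$ (i, g j)) $$ (i,j)"
    using ij by simp
qed (use S in auto)

lemma mult_delta_left:
  fixes W :: "complex mat"
  assumes W: "W \<in> carrier_mat n c" and h: "\<And>i. i < r \<Longrightarrow> h i < n"
  shows "mat r n (\<lambda>(i,j). if j = h i then d i else 0) * W = mat r c (\<lambda>(i,j). d i * W $$ (h i, j))"
proof (rule eq_matI)
  fix i j assume i: "i < dim_row (mat r c (\<lambda>(i,j). d i * W $$ (h i, j)))" and j: "j < dim_col (mat r c (\<lambda>(i,j). d i * W $$ (h i, j)))"
  then have ij: "i < r" "j < c" by auto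
  have "(mat r n (\<lambda>(i,j). if j = h i then d i else 0) * W) $$ (i,j) = (\<Sum>l<n. (if l = h i then d i else 0) * W $$ (l, j))"
    using W ij by (auto simp: scalar_prod_def atLeast0LessThan)
  also have "\<dots> = (\<Sum>l<n. if l = h i then d i * W $$ (l, j) else 0)" by (intro sum.cong) auto
  also have "\<dots> = d i * W $$ (h i, j)" using h[OF ij(1)] by (simp add: sum.delta')
  finally show "(mat r n (\<lambda>(i,j). if j = h i then d i else 0) * W) $$ (i,j) = mat r c (\<lambda>(i,j). d i * W $$ (h i, j)) $$ (i,j)"
    using ij by simp
qed (use W in auto)

lemma mult_delta_left1:
  fixes W :: "complex mat"
  assumes W: "W \<in> carrier_mat n c" and h: "\<And>i. i < r \<Longrightarrow> h i < n"
  shows "mat r n (\<lambda>(i,j). if j = h i then 1 else 0) * W = mat r c (\<lambda>(i,j). W $$ (h i, j))"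
  using mult_delta_left[OF W h, where d="\<lambda>_. 1"] by simp

lemma vanish_core:
  fixes M W L G H :: "complex mat"
  assumes M: "M \<in> carrier_mat n n" and W: "W \<in> carrier_mat n K" and L: "L \<in> carrier_mat K n"
    and MW: "M * W = 0\<^sub>m n K" and LW: "L * W = 1\<^sub>m K"
    and G: "G \<in> carrier_mat n q" and H: "H \<in> carrier_mat q n" and qK: "q < K"
  shows "det (M + G * H) = 0"
proof -
  define X where "X = H * W"
  have X: "X \<in> carrier_mat q K" using H W by (simp add: X_def)
  define Z where "Z = mat K K (\<lambda>(i,j). if i < q then X $$ (i,j) else 0)"
  have Z: "Z \<in> carrier_mat K K" by (simp add: Z_def)
  have "Z = mat\<^sub>r K K (\<lambda>i. if i = q then 0\<^sub>v K else row Z i)"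
    by (intro eq_matI) (auto simp: Z_def)
  then have "det Z = 0" using det_row_0[OF qK, of "\<lambda>i. row Z i"] Z by (auto simp: Pi_def)
  then obtain c where c: "c \<in> carrier_vec K" "c \<noteq> 0\<^sub>v K" "Z *\<^sub>v c = 0\<^sub>v K"
    using det_0_iff_vec_prod_zero[OF Z] by blast
  have Xc: "X *\<^sub>v c = 0\<^sub>v q"
  proof (rule eq_vecI)
    fix i assume "i < dim_vec (0\<^sub>v q :: complex vec)"
    then have i: "i < q" by simp
    have "(Z *\<^sub>v c) $ i = 0" using c(3) i qK by simp
    moreover have "(Z *\<^sub>v c) $ i = row X i \<bullet> c"
      using i qK X c(1) unfolding Z_def by (auto simp: scalar_prod_def)
    ultimately show "(X *\<^sub>v c) $ i = 0\<^sub>v q $ i" using i X by simp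
  qed (use X in simp)
  define v where "v = W *\<^sub>v c"
  have v: "v \<in> carrier_vec n" using W c by (simp add: v_def)
  have "L *\<^sub>v v = c" unfolding v_def using assoc_mult_mat_vec[OF L W c(1)] LW c(1) by simp
  then have vnz: "v \<noteq> 0\<^sub>v n" using c(2) mat_mult_zero_vec'[OF L] by auto
  have GH: "G * H \<in> carrier_mat n n" using G H by simp
  have "(M + G * H) *\<^sub>v v = M *\<^sub>v v + (G * H) *\<^sub>v v" by (rule add_mult_distrib_mat_vec[OF M GH v])
  also have "M *\<^sub>v v = 0\<^sub>v n" unfolding v_def using assoc_mult_mat_vec[OF M W c(1), symmetric] MW c(1)
    by (simp add: zero_mat_mult_vec')
  also have "(G * H) *\<^sub>v v = G *\<^sub>v (X *\<^sub>v c)"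
    unfolding v_def X_def using G H W c(1) by simp
  also have "\<dots> = 0\<^sub>v n" unfolding Xc by (rule mat_mult_zero_vec'[OF G])
  finally have "(M + G * H) *\<^sub>v v = 0\<^sub>v n" by simp
  then show ?thesis using det_0_iff_vec_prod_zero[of "M + G * H" n] M GH v vnz by auto
qed

fun XA :: "jkblock \<Rightarrow> complex mat" where
  "XA (Kron k) = kron_P k" | "XA (Jord \<mu> m) = jordan_block m \<mu>" | "XA (JordInf m) = 1\<^sub>m m"
fun XB :: "jkblock \<Rightarrow> complex mat" where
  "XB (Kron k) = kron_Q k" | "XB (Jord \<mu> m) = 1\<^sub>m m" | "XB (JordInf m) = jordan_block m 0"
fun xr :: "jkblock \<Rightarrow> nat" where
  "xr (Kron k) = k - 1" | "xr (Jord \<mu> m) = m" | "xr (JordInf m) = m"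
fun xc :: "jkblock \<Rightarrow> nat" where
  "xc (Kron k) = k" | "xc (Jord \<mu> m) = m" | "xc (JordInf m) = m"

definition bdim :: "jkblock \<Rightarrow> nat" where "bdim b = xr b + xc b"

lemma XA_carrier: "XA b \<in> carrier_mat (xr b) (xc b)"
  by (cases b) (auto simp: kron_P_def)
lemma XB_carrier: "XB b \<in> carrier_mat (xr b) (xc b)"
  by (cases b) (auto simp: kron_Q_def)

lemma blkA_XA: "blkA b = skew_blk (XA b)" by (cases b) auto
lemma blkB_XB: "blkB b = skew_blk (XB b)" by (cases b) auto

lemma skew_blk_carrier: "M \<in> carrier_mat r c \<Longrightarrow> skew_blk M \<in> carrier_mat (r + c) (r + c)"
  unfolding skew_blk_def by (rule four_block_carrier_mat) auto

lemma skew_blk_lin: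
  assumes "X \<in> carrier_mat r c" "Y \<in> carrier_mat r c"
  shows "\<alpha> \<cdot>\<^sub>m skew_blk X + \<beta> \<cdot>\<^sub>m skew_blk Y = skew_blk (\<alpha> \<cdot>\<^sub>m X + \<beta> \<cdot>\<^sub>m Y :: complex mat)"
  using assms by (intro eq_matI) (auto simp: skew_blk_def)

definition Db :: "complex \<Rightarrow> complex \<Rightarrow> jkblock \<Rightarrow> complex mat" where
  "Db \<alpha> \<beta> b = skew_blk (\<alpha> \<cdot>\<^sub>m XA b + \<beta> \<cdot>\<^sub>m XB b)"

lemma Db_eq: "\<alpha> \<cdot>\<^sub>m blkA b + \<beta> \<cdot>\<^sub>m blkB b = Db \<alpha> \<beta> b"
  unfolding blkA_XA blkB_XB Db_def by (rule skew_blk_lin[OF XA_carrier XB_carrier])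

lemma blkA_carrier: "blkA b \<in> carrier_mat (bdim b) (bdim b)"
  unfolding blkA_XA bdim_def by (rule skew_blk_carrier[OF XA_carrier])
lemma blkB_carrier: "blkB b \<in> carrier_mat (bdim b) (bdim b)"
  unfolding blkB_XB bdim_def by (rule skew_blk_carrier[OF XB_carrier])
lemma Db_carrier: "Db \<alpha> \<beta> b \<in> carrier_mat (bdim b) (bdim b)"
  unfolding Db_def bdim_def by (rule skew_blk_carrier) (use XA_carrier XB_carrier in auto)

definition sing :: "complex \<Rightarrow> complex \<Rightarrow> jkblock \<Rightarrow> bool" where
  "sing \<alpha> \<beta> b = (case b of Kron k \<Rightarrow> False | Jord \<mu> m \<Rightarrow> \<alpha> * \<mu> + \<beta> = 0 | JordInf m \<Rightarrow> \<alpha> = 0)"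

definition kc :: "complex \<Rightarrow> complex \<Rightarrow> jkblock \<Rightarrow> nat" where
  "kc \<alpha> \<beta> b = (case b of Kron k \<Rightarrow> 1 | _ \<Rightarrow> if sing \<alpha> \<beta> b then 2 else 0)"

definition kerdata :: "complex \<Rightarrow> complex \<Rightarrow> jkblock \<Rightarrow> complex mat \<Rightarrow> complex mat \<Rightarrow> bool" where
  "kerdata \<alpha> \<beta> b W L \<longleftrightarrow> W \<in> carrier_mat (bdim b) (kc \<alpha> \<beta> b) \<and> L \<in> carrier_mat (kc \<alpha> \<beta> b) (bdim b)
     \<and> Db \<alpha> \<beta> b * W = 0\<^sub>m (bdim b) (kc \<alpha> \<beta> b) \<and> L * W = 1\<^sub>m (kc \<alpha> \<beta> b)"

lemma kerdata_nonsing: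
  assumes "\<not> (\<exists>k. b = Kron k)" "\<not> sing \<alpha> \<beta> b"
  shows "kerdata \<alpha> \<beta> b (0\<^sub>m (bdim b) 0) (0\<^sub>m 0 (bdim b))"
proof -
  have "kc \<alpha> \<beta> b = 0" using assms by (cases b) (auto simp: kc_def)
  then show ?thesis unfolding kerdata_def using Db_carrier[of \<alpha> \<beta> b]
    by (auto intro!: eq_matI)
qed

lemma kerdata_sing:
  fixes N :: "complex mat"
  assumes m: "m \<ge> 1" and N: "N \<in> carrier_mat m m"
    and c0: "\<And>i. i < m \<Longrightarrow> N $$ (i, 0) = 0" and r0: "\<And>j. j < m \<Longrightarrow> N $$ (m - 1, j) = 0"
  defines "g \<equiv> (\<lambda>j::nat. if j = 0 then m else m - 1)"
  shows "skew_blk N * mat (m + m) 2 (\<lambda>(i,j). if i = g j then 1 else 0) = 0\<^sub>m (m + m) 2"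
    and "mat 2 (m + m) (\<lambda>(i,j). if j = g i then 1 else 0) * mat (m + m) 2 (\<lambda>(i,j). if i = g j then 1 else 0) = (1\<^sub>m 2 :: complex mat)"
proof -
  have S: "skew_blk N \<in> carrier_mat (m + m) (m + m)" by (rule skew_blk_carrier[OF N])
  have g: "\<And>j. j < 2 \<Longrightarrow> g j < m + m" using m by (auto simp: g_def)
  have "skew_blk N * mat (m + m) 2 (\<lambda>(i,j). if i = g j then 1 else 0) = mat (m + m) 2 (\<lambda>(i,j). skew_blk N $$ (i, g j))"
    by (rule mult_delta_right[OF S g])
  also have "\<dots> = 0\<^sub>m (m + m) 2"
    apply (intro eq_matI)
    using N m c0 r0 g by (auto simp: skew_blk_def g_def)
  finally show "skew_blk N * mat (m + m) 2 (\<lambda>(i,j). if i = g j then 1 else 0) = 0\<^sub>m (m + m) 2" .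
  have L: "(mat (m + m) 2 (\<lambda>(i,j). if i = g j then 1 else 0) :: complex mat) \<in> carrier_mat (m + m) 2" by simp
  show "mat 2 (m + m) (\<lambda>(i,j). if j = g i then 1 else 0) * mat (m + m) 2 (\<lambda>(i,j). if i = g j then 1 else 0) = (1\<^sub>m 2 :: complex mat)"
  proof -
    have "mat 2 (m + m) (\<lambda>(i,j). if j = g i then 1 else 0) * mat (m + m) 2 (\<lambda>(i,j). if i = g j then 1 else 0)
      = (mat 2 2 (\<lambda>(i,j). mat (m + m) 2 (\<lambda>(i,j). if i = g j then 1 else 0) $$ (g i, j)) :: complex mat)"
      by (rule mult_delta_left1[of _ "m + m" 2 2 g]) (use g in auto)
    also have "\<dots> = 1\<^sub>m 2" using m g by (intro eq_matI) (auto simp: g_def)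
    finally show ?thesis .
  qed
qed


lemma kron_core:
  fixes N Z :: "complex mat"
  assumes N: "N \<in> carrier_mat (k - 1) k" and Z: "Z \<in> carrier_mat k 1" and NZ: "N * Z = 0\<^sub>m (k - 1) 1"
  shows "skew_blk N * four_block_mat (0\<^sub>m (k - 1) 1) (0\<^sub>m (k - 1) 0) Z (0\<^sub>m k 0) = 0\<^sub>m (k - 1 + k) 1"
proof -
  have "skew_blk N * four_block_mat (0\<^sub>m (k - 1) 1) (0\<^sub>m (k - 1) 0) Z (0\<^sub>m k 0) =
    four_block_mat (0\<^sub>m (k - 1) (k - 1) * 0\<^sub>m (k - 1) 1 + N * Z) (0\<^sub>m (k - 1) (k - 1) * 0\<^sub>m (k - 1) 0 + N * 0\<^sub>m k 0)
      (- N\<^sup>T * 0\<^sub>m (k - 1) 1 + 0\<^sub>m k k * Z) (- N\<^sup>T * 0\<^sub>m (k - 1) 0 + 0\<^sub>m k k * 0\<^sub>m k 0)"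
  proof -
    have "skew_blk N = four_block_mat (0\<^sub>m (k - 1) (k - 1)) N (- N\<^sup>T) (0\<^sub>m k k)"
      using N by (simp add: skew_blk_def)
    then show ?thesis using N Z by (simp only:) (rule mult_four_block_mat, auto)
  qed
  also have "\<dots> = four_block_mat (0\<^sub>m (k - 1) 1) (0\<^sub>m (k - 1) 0) (0\<^sub>m k 1) (0\<^sub>m k 0)"
    using N Z NZ by (intro arg_cong4[where f=four_block_mat] eq_matI) (auto simp: scalar_prod_def)
  also have "\<dots> = 0\<^sub>m (k - 1 + k) 1" by simp
  finally show ?thesis .
qed

lemma kron_NZ:
  assumes k: "k \<ge> 1"
  shows "(\<alpha> \<cdot>\<^sub>m kron_P k + \<beta> \<cdot>\<^sub>m kron_Q k) * mat k 1 (\<lambda>(t,_). (-\<beta>) ^ (k - 1 - t) * \<alpha> ^ t) = 0\<^sub>m (k - 1) 1"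
proof (rule eq_matI)
  fix i j assume "i < dim_row (0\<^sub>m (k - 1) 1 :: complex mat)" "j < dim_col (0\<^sub>m (k - 1) 1 :: complex mat)"
  then have i: "i < k - 1" and j: "j = 0" by auto
  define z where "z = (\<lambda>t. (-\<beta>) ^ (k - 1 - t) * \<alpha> ^ t)"
  have "((\<alpha> \<cdot>\<^sub>m kron_P k + \<beta> \<cdot>\<^sub>m kron_Q k) * mat k 1 (\<lambda>(t,_). (-\<beta>) ^ (k - 1 - t) * \<alpha> ^ t)) $$ (i, j)
     = (\<Sum>t<k. (\<alpha> * (if t = i then 1 else 0) + \<beta> * (if t = Suc i then 1 else 0)) * z t)"
    using i j by (simp add: scalar_prod_def kron_P_def kron_Q_def z_def atLeast0LessThan)
  also have "\<dots> = (\<Sum>t<k. (if t = i then \<alpha> * z t else 0)) + (\<Sum>t<k. (if t = Suc i then \<beta> * z t else 0))"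
    by (subst sum.distrib[symmetric], intro sum.cong) (auto simp: algebra_simps)
  also have "\<dots> = \<alpha> * z i + \<beta> * z (Suc i)"
  proof -
    have "i < k" "Suc i < k" using i by auto
    then show ?thesis by (simp add: sum.delta')
  qed
  also have "\<dots> = 0"
  proof -
    have e: "k - 1 - i = Suc (k - 1 - Suc i)" using i by simp
    show ?thesis unfolding z_def e by (simp add: algebra_simps)
  qed
  finally show "((\<alpha> \<cdot>\<^sub>m kron_P k + \<beta> \<cdot>\<^sub>m kron_Q k) * mat k 1 (\<lambda>(t,_). (-\<beta>) ^ (k - 1 - t) * \<alpha> ^ t)) $$ (i, j) = 0\<^sub>m (k - 1) 1 $$ (i, j)"
    using i j by simp
qed (auto simp: kron_P_def kron_Q_def)

lemma kerdata_kron: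
  assumes k: "k \<ge> 1" and ab: "(\<alpha>, \<beta>) \<noteq> (0, 0)"
  shows "\<exists>W L. kerdata \<alpha> \<beta> (Kron k) W L"
proof -
  define N where "N = \<alpha> \<cdot>\<^sub>m kron_P k + \<beta> \<cdot>\<^sub>m kron_Q k"
  define Z :: "complex mat" where "Z = mat k 1 (\<lambda>(t,_). (-\<beta>) ^ (k - 1 - t) * \<alpha> ^ t)"
  define W where "W = four_block_mat (0\<^sub>m (k - 1) 1) (0\<^sub>m (k - 1) 0) Z (0\<^sub>m k 0)"
  have N: "N \<in> carrier_mat (k - 1) k" by (simp add: N_def kron_P_def kron_Q_def)
  have Z: "Z \<in> carrier_mat k 1" by (simp add: Z_def)
  have W: "W \<in> carrier_mat (bdim (Kron k)) (kc \<alpha> \<beta> (Kron k))"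
    unfolding W_def bdim_def kc_def using four_block_carrier_mat[of "0\<^sub>m (k - 1) 1" "k - 1" 1 "0\<^sub>m k 0" k 0] Z by auto
  have DW: "Db \<alpha> \<beta> (Kron k) * W = 0\<^sub>m (bdim (Kron k)) (kc \<alpha> \<beta> (Kron k))"
    unfolding Db_def W_def bdim_def kc_def using kron_core[OF N Z] kron_NZ[OF k] by (simp add: N_def Z_def)
  define s where "s = (if \<alpha> \<noteq> 0 then k - 1 + (k - 1) else k - 1)"
  have s: "s < k - 1 + k" using k by (auto simp: s_def)
  have Ws: "W $$ (s, 0) \<noteq> 0"
    using k ab s unfolding W_def Z_def s_def by auto
  define L :: "complex mat" where "L = mat 1 (k - 1 + k) (\<lambda>(i,j). if j = s then 1 / W $$ (s, 0) else 0)"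
  have W': "W \<in> carrier_mat (k - 1 + k) 1" using W by (simp add: bdim_def kc_def)
  have "L * W = mat 1 1 (\<lambda>(i,j). 1 / W $$ (s, 0) * W $$ (s, j))"
    unfolding L_def by (rule mult_delta_left[OF W', where h="\<lambda>_. s" and d="\<lambda>_. 1 / W $$ (s, 0)"]) (use s in auto)
  also have "\<dots> = 1\<^sub>m 1" using Ws by (intro eq_matI) auto
  finally have LW: "L * W = 1\<^sub>m (kc \<alpha> \<beta> (Kron k))" by (simp add: kc_def)
  have L: "L \<in> carrier_mat (kc \<alpha> \<beta> (Kron k)) (bdim (Kron k))" by (simp add: L_def kc_def bdim_def)
  show ?thesis unfolding kerdata_def using W L DW LW by blast
qed

lemma Db_dims[simp]: "dim_row (Db \<alpha> \<beta> b) = bdim b" "dim_col (Db \<alpha> \<beta> b) = bdim b"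
  using Db_carrier[of \<alpha> \<beta> b] by auto

lemma kerdata_dims: "kerdata \<alpha> \<beta> b W L \<Longrightarrow> dim_row W = bdim b \<and> dim_col W = kc \<alpha> \<beta> b \<and> dim_row L = kc \<alpha> \<beta> b \<and> dim_col L = bdim b"
  unfolding kerdata_def by (meson carrier_matD)

lemma block_kernel:
  assumes v: "jk_valid b" and ab: "(\<alpha>, \<beta>) \<noteq> (0, 0)"
  shows "\<exists>W L. kerdata \<alpha> \<beta> b W L"
proof (cases b)
  case (Kron k) then show ?thesis using kerdata_kron[OF _ ab] v by auto
next
  case (Jord \<mu> m)
  show ?thesis
  proof (cases "sing \<alpha> \<beta> b")
    case False then show ?thesis using kerdata_nonsing[OF _ False] Jord by blast
  next
    case True
    then have s: "\<alpha> * \<mu> + \<beta> = 0" using Jord by (simp add: sing_def)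
    have m: "m \<ge> 1" using v Jord by simp
    define N :: "complex mat" where "N = \<alpha> \<cdot>\<^sub>m jordan_block m \<mu> + \<beta> \<cdot>\<^sub>m 1\<^sub>m m"
    have N: "N \<in> carrier_mat m m" by (simp add: N_def)
    have c0: "\<And>i. i < m \<Longrightarrow> N $$ (i, 0) = 0" using s m by (auto simp: N_def)
    have r0: "\<And>j. j < m \<Longrightarrow> N $$ (m - 1, j) = 0" using s m by (auto simp: N_def)
    note K = kerdata_sing[OF m N c0 r0]
    have D: "Db \<alpha> \<beta> b = skew_blk N" by (simp add: Db_def N_def Jord)
    have "kerdata \<alpha> \<beta> b (mat (m + m) 2 (\<lambda>(i,j). if i = (if j = 0 then m else m - 1) then 1 else 0))
       (mat 2 (m + m) (\<lambda>(i,j). if j = (if i = 0 then m else m - 1) then 1 else 0))"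
      unfolding kerdata_def D using K True Jord by (simp add: bdim_def kc_def)
    then show ?thesis by blast
  qed
next
  case (JordInf m)
  show ?thesis
  proof (cases "sing \<alpha> \<beta> b")
    case False then show ?thesis using kerdata_nonsing[OF _ False] JordInf by blast
  next
    case True
    then have s: "\<alpha> = 0" using JordInf by (simp add: sing_def)
    have m: "m \<ge> 1" using v JordInf by simp
    define N :: "complex mat" where "N = \<alpha> \<cdot>\<^sub>m 1\<^sub>m m + \<beta> \<cdot>\<^sub>m jordan_block m 0"
    have N: "N \<in> carrier_mat m m" by (simp add: N_def)
    have c0: "\<And>i. i < m \<Longrightarrow> N $$ (i, 0) = 0" using s m by (auto simp: N_def)
    have r0: "\<And>j. j < m \<Longrightarrow> N $$ (m - 1, j) = 0" using s m by (auto simp: N_def)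
    note K = kerdata_sing[OF m N c0 r0]
    have D: "Db \<alpha> \<beta> b = skew_blk N" by (simp add: Db_def N_def JordInf)
    have "kerdata \<alpha> \<beta> b (mat (m + m) 2 (\<lambda>(i,j). if i = (if j = 0 then m else m - 1) then 1 else 0))
       (mat 2 (m + m) (\<lambda>(i,j). if j = (if i = 0 then m else m - 1) then 1 else 0))"
      unfolding kerdata_def D using K True JordInf by (simp add: bdim_def kc_def)
    then show ?thesis by blast
  qed
qed

definition Wf :: "complex \<Rightarrow> complex \<Rightarrow> jkblock \<Rightarrow> complex mat" where
  "Wf \<alpha> \<beta> b = (SOME W. \<exists>L. kerdata \<alpha> \<beta> b W L)"
definition Lf :: "complex \<Rightarrow> complex \<Rightarrow> jkblock \<Rightarrow> complex mat" where
  "Lf \<alpha> \<beta> b = (SOME L. kerdata \<alpha> \<beta> b (Wf \<alpha> \<beta> b) L)"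

lemma kerdata_some:
  assumes "jk_valid b" "(\<alpha>, \<beta>) \<noteq> (0, 0)"
  shows "kerdata \<alpha> \<beta> b (Wf \<alpha> \<beta> b) (Lf \<alpha> \<beta> b)"
proof -
  have "\<exists>L. kerdata \<alpha> \<beta> b (Wf \<alpha> \<beta> b) L"
    unfolding Wf_def using someI_ex[OF block_kernel[OF assms]] .
  then show ?thesis unfolding Lf_def by (rule someI_ex)
qed

definition isK :: "jkblock \<Rightarrow> nat" where "isK b = (case b of Kron k \<Rightarrow> 1 | _ \<Rightarrow> 0)"

lemma kron_inv_size: "size (kron_inv bl) = sum_list (map isK bl)"
  unfolding kron_inv_def
proof (induction bl)
  case Nil then show ?case by simp
next
  case (Cons b bl) then show ?case by (cases b) (auto simp: isK_def)
qed

lemma kc_ge: "isK b \<le> kc \<alpha> \<beta> b" by (cases b) (auto simp: isK_def kc_def)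
lemma kc_gt: "sing \<alpha> \<beta> b \<Longrightarrow> isK b < kc \<alpha> \<beta> b" by (cases b) (auto simp: isK_def kc_def sing_def)

lemma kc_sum_gt: "\<exists>b\<in>set bl. sing \<alpha> \<beta> b \<Longrightarrow> sum_list (map isK bl) < sum_list (map (kc \<alpha> \<beta>) bl)"
proof (induction bl)
  case Nil then show ?case by simp
next
  case (Cons b bl)
  have ge: "sum_list (map isK bl) \<le> sum_list (map (kc \<alpha> \<beta>) bl)"
    by (rule sum_list_mono) (rule kc_ge)
  show ?case
  proof (cases "sing \<alpha> \<beta> b")
    case True then show ?thesis using kc_gt[OF True] ge by simp
  next
    case False then show ?thesis using Cons kc_ge[of b \<alpha> \<beta>] by simp
  qed
qed

lemma vanish_pair:
  fixes A B G H :: "complex mat"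
  assumes JK: "JK_decomp A B bl" and A: "A \<in> carrier_mat n n" and B: "B \<in> carrier_mat n n"
    and ab: "(\<alpha>, \<beta>) \<noteq> (0, 0)" and sg: "\<exists>b\<in>set bl. sing \<alpha> \<beta> b"
    and G: "G \<in> carrier_mat n q" and H: "H \<in> carrier_mat q n" and q: "q = size (kron_inv bl)"
  shows "det (\<alpha> \<cdot>\<^sub>m A + \<beta> \<cdot>\<^sub>m B + G * H) = 0"
proof -
  from JK obtain P where P: "P \<in> carrier_mat n n" and Pinv: "invertible_mat P"
    and PA: "P\<^sup>T * A * P = blkdiag (map blkA bl)" and PB: "P\<^sup>T * B * P = blkdiag (map blkB bl)"
    and val: "\<forall>b\<in>set bl. jk_valid b"
    using A unfolding JK_decomp_def by auto
  from Pinv P obtain Pi where Pi: "Pi \<in> carrier_mat n n" and PPi: "P * Pi = 1\<^sub>m n" and PiP: "Pi * P = 1\<^sub>m n"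
    unfolding invertible_mat_def inverts_mat_def square_mat.simps
    by (metis carrier_matD(1) carrier_matI index_mult_mat(3) index_one_mat(3))
  let ?M = "\<alpha> \<cdot>\<^sub>m A + \<beta> \<cdot>\<^sub>m B"
  have M: "?M \<in> carrier_mat n n" using A B by simp
  let ?D = "blkdiag (map (Db \<alpha> \<beta>) bl)"
  have bdA: "\<And>b. dim_row (blkA b) = bdim b" "\<And>b. dim_col (blkA b) = bdim b"
    using blkA_carrier by auto
  have bdB: "\<And>b. dim_row (blkB b) = bdim b" "\<And>b. dim_col (blkB b) = bdim b"
    using blkB_carrier by auto
  have n: "n = sum_list (map bdim bl)"
  proof -
    have "dim_row (P\<^sup>T * A * P) = n" using P A by simp
    then show ?thesis unfolding PA by (simp add: o_def bdA)
  qed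
  have PMP: "P\<^sup>T * ?M * P = ?D"
  proof -
    have "P\<^sup>T * ?M * P = \<alpha> \<cdot>\<^sub>m (P\<^sup>T * A * P) + \<beta> \<cdot>\<^sub>m (P\<^sup>T * B * P)"
    proof -
      have PT: "P\<^sup>T \<in> carrier_mat n n" using P by simp
      have "P\<^sup>T * ?M = \<alpha> \<cdot>\<^sub>m (P\<^sup>T * A) + \<beta> \<cdot>\<^sub>m (P\<^sup>T * B)"
        using mult_add_distrib_mat[OF PT, of "\<alpha> \<cdot>\<^sub>m A" n "\<beta> \<cdot>\<^sub>m B"] A B
          mult_smult_distrib[OF PT A] mult_smult_distrib[OF PT B] by simp
      moreover have "(\<alpha> \<cdot>\<^sub>m (P\<^sup>T * A) + \<beta> \<cdot>\<^sub>m (P\<^sup>T * B)) * P = \<alpha> \<cdot>\<^sub>m (P\<^sup>T * A * P) + \<beta> \<cdot>\<^sub>m (P\<^sup>T * B * P)"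
      proof -
        have c1: "P\<^sup>T * A \<in> carrier_mat n n" "P\<^sup>T * B \<in> carrier_mat n n" using PT A B by auto
        show ?thesis using add_mult_distrib_mat[of "\<alpha> \<cdot>\<^sub>m (P\<^sup>T * A)" n n "\<beta> \<cdot>\<^sub>m (P\<^sup>T * B)" P n] c1 P
          mult_smult_assoc_mat[OF c1(1) P] mult_smult_assoc_mat[OF c1(2) P] by simp
      qed
      ultimately show ?thesis by simp
    qed
    also have "\<dots> = blkdiag (map (\<lambda>b. \<alpha> \<cdot>\<^sub>m blkA b) bl) + blkdiag (map (\<lambda>b. \<beta> \<cdot>\<^sub>m blkB b) bl)"
      unfolding PA PB blkdiag_smult by (simp add: o_def)
    also have "\<dots> = blkdiag (map (\<lambda>b. \<alpha> \<cdot>\<^sub>m blkA b + \<beta> \<cdot>\<^sub>m blkB b) bl)"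
      by (rule blkdiag_map_add) (simp add: bdA bdB)
    also have "\<dots> = ?D" by (simp add: Db_eq)
    finally show ?thesis .
  qed
  have kd: "\<And>b. b \<in> set bl \<Longrightarrow> kerdata \<alpha> \<beta> b (Wf \<alpha> \<beta> b) (Lf \<alpha> \<beta> b)"
    using kerdata_some val ab by blast
  let ?K = "sum_list (map (kc \<alpha> \<beta>) bl)"
  let ?Wd = "blkdiag (map (Wf \<alpha> \<beta>) bl)" and ?Ld = "blkdiag (map (Lf \<alpha> \<beta>) bl)"
  have Wd: "?Wd \<in> carrier_mat n ?K"
  proof -
    have r: "sum_list (map (\<lambda>b. dim_row (Wf \<alpha> \<beta> b)) bl) = sum_list (map bdim bl)"
      by (rule arg_cong[where f=sum_list], rule map_cong) (use kd in \<open>auto simp: kerdata_def\<close>)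
    have c: "sum_list (map (\<lambda>b. dim_col (Wf \<alpha> \<beta> b)) bl) = ?K"
      by (rule arg_cong[where f=sum_list], rule map_cong) (use kd in \<open>auto simp: kerdata_def\<close>)
    show ?thesis unfolding n by (intro carrier_matI) (simp_all add: o_def r c)
  qed
  have Ld: "?Ld \<in> carrier_mat ?K n"
  proof -
    have c: "sum_list (map (\<lambda>b. dim_col (Lf \<alpha> \<beta> b)) bl) = sum_list (map bdim bl)"
      by (rule arg_cong[where f=sum_list], rule map_cong) (use kd in \<open>auto simp: kerdata_def\<close>)
    have r: "sum_list (map (\<lambda>b. dim_row (Lf \<alpha> \<beta> b)) bl) = ?K"
      by (rule arg_cong[where f=sum_list], rule map_cong) (use kd in \<open>auto simp: kerdata_def\<close>)
    show ?thesis unfolding n by (intro carrier_matI) (simp_all add: o_def r c)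
  qed
  have D: "?D \<in> carrier_mat n n"
    unfolding n by (intro carrier_matI) (simp_all add: o_def)
  have DW: "?D * ?Wd = 0\<^sub>m n ?K"
  proof -
    have "?D * ?Wd = blkdiag (map (\<lambda>b. Db \<alpha> \<beta> b * Wf \<alpha> \<beta> b) bl)"
      by (rule blkdiag_map_mult) (use kd kerdata_dims in force)
    also have "\<dots> = 0\<^sub>m (dim_row \<dots>) (dim_col \<dots>)"
      by (rule blkdiag_zero) (use kd in \<open>auto simp: kerdata_def\<close>)
    also have "\<dots> = 0\<^sub>m n ?K" using \<open>?D * ?Wd = _\<close> D Wd by (metis carrier_matD index_mult_mat(2,3))
    finally show ?thesis .
  qed
  have LW: "?Ld * ?Wd = 1\<^sub>m ?K"
  proof -
    have "?Ld * ?Wd = blkdiag (map (\<lambda>b. Lf \<alpha> \<beta> b * Wf \<alpha> \<beta> b) bl)"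
      by (rule blkdiag_map_mult) (use kd kerdata_dims in force)
    also have "\<dots> = 1\<^sub>m (dim_row \<dots>)"
      by (rule blkdiag_one) (use kd in \<open>auto simp: kerdata_def\<close>)
    also have "\<dots> = 1\<^sub>m ?K" using \<open>?Ld * ?Wd = _\<close> Ld Wd by (metis carrier_matD index_mult_mat(2))
    finally show ?thesis .
  qed
  define W where "W = P * ?Wd"
  define L where "L = ?Ld * Pi"
  have W: "W \<in> carrier_mat n ?K" using P Wd by (simp add: W_def)
  have L: "L \<in> carrier_mat ?K n" using Pi Ld by (simp add: L_def)
  have PWd: "P * ?Wd \<in> carrier_mat n ?K" using P Wd by simp
  have "L * W = ?Ld * (Pi * (P * ?Wd))" unfolding L_def W_def by (rule assoc_mult_mat[OF Ld Pi PWd])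
  also have "Pi * (P * ?Wd) = (Pi * P) * ?Wd" by (rule assoc_mult_mat[OF Pi P Wd, symmetric])
  also have "\<dots> = ?Wd" unfolding PiP by (rule left_mult_one_mat[OF Wd])
  finally have LW': "L * W = 1\<^sub>m ?K" using LW by simp
  have PT: "P\<^sup>T \<in> carrier_mat n n" "Pi\<^sup>T \<in> carrier_mat n n" using P Pi by auto
  have PiPT: "Pi\<^sup>T * P\<^sup>T = 1\<^sub>m n" using transpose_mult[OF P Pi] PPi by simp
  have MW0: "?M * W \<in> carrier_mat n ?K" using M W by simp
  have "?M * W = (Pi\<^sup>T * P\<^sup>T) * (?M * W)" unfolding PiPT by (rule left_mult_one_mat[OF MW0, symmetric])
  also have "\<dots> = Pi\<^sup>T * (P\<^sup>T * (?M * W))" by (rule assoc_mult_mat[OF PT(2) PT(1) MW0])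
  also have "P\<^sup>T * (?M * W) = P\<^sup>T * (?M * (P * ?Wd))" unfolding W_def ..
  also have "\<dots> = P\<^sup>T * ((?M * P) * ?Wd)" using assoc_mult_mat[OF M P Wd] by simp
  also have "\<dots> = (P\<^sup>T * (?M * P)) * ?Wd"
    using assoc_mult_mat[OF PT(1) _ Wd, of "?M * P"] M P by simp
  also have "P\<^sup>T * (?M * P) = P\<^sup>T * ?M * P" using assoc_mult_mat[OF PT(1) M P] by simp
  also have "\<dots> = ?D" by (rule PMP)
  also have "?D * ?Wd = 0\<^sub>m n ?K" by (rule DW)
  also have "Pi\<^sup>T * 0\<^sub>m n ?K = 0\<^sub>m n ?K" by (rule right_mult_zero_mat[OF PT(2)])
  finally have MW: "?M * W = 0\<^sub>m n ?K" .
  have qK: "q < ?K" unfolding q kron_inv_size by (rule kc_sum_gt[OF sg])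
  show ?thesis by (rule vanish_core[OF M W L MW LW' G H qK])
qed

lemma det_ut_nonzero:
  fixes N :: "complex mat"
  assumes N: "N \<in> carrier_mat m m" and ut: "\<And>i j. i < m \<Longrightarrow> j < i \<Longrightarrow> N $$ (i,j) = 0"
    and d: "\<And>i. i < m \<Longrightarrow> N $$ (i,i) \<noteq> 0"
  shows "det N \<noteq> 0"
proof -
  have "upper_triangular N" using N ut unfolding upper_triangular_def by auto
  then have "det N = prod_list (diag_mat N)" using det_upper_triangular N by blast
  moreover have "0 \<notin> set (diag_mat N)" using N d by (auto simp: diag_mat_def)
  ultimately show ?thesis by (simp add: prod_list_zero_iff)
qed

lemma skew_mult_vec:
  fixes N :: "complex mat"
  assumes N: "N \<in> carrier_mat r c" and y: "y \<in> carrier_vec r" and z: "z \<in> carrier_vec c"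
    and E: "E \<in> carrier_mat c c"
  shows "four_block_mat (0\<^sub>m r r) N (- N\<^sup>T) E *\<^sub>v (y @\<^sub>v z) = (N *\<^sub>v z) @\<^sub>v (E *\<^sub>v z - N\<^sup>T *\<^sub>v y)"
proof -
  have "four_block_mat (0\<^sub>m r r) N (- N\<^sup>T) E *\<^sub>v (y @\<^sub>v z) = (0\<^sub>m r r *\<^sub>v y + N *\<^sub>v z) @\<^sub>v (- N\<^sup>T *\<^sub>v y + E *\<^sub>v z)"
    by (rule four_block_mat_mult_vec) (use N y z E in auto)
  also have "0\<^sub>m r r *\<^sub>v y + N *\<^sub>v z = N *\<^sub>v z" using zero_mat_mult_vec'[OF y] N z by simp
  also have "- N\<^sup>T *\<^sub>v y + E *\<^sub>v z = E *\<^sub>v z - N\<^sup>T *\<^sub>v y"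
    using N y z E by (intro eq_vecI) (auto simp: scalar_prod_def sum_negf)
  finally show ?thesis .
qed

lemma det_skew_nonzero:
  fixes N :: "complex mat"
  assumes N: "N \<in> carrier_mat m m" and dN: "det N \<noteq> 0"
  shows "det (skew_blk N) \<noteq> 0"
proof
  assume "det (skew_blk N) = 0"
  then obtain v where v: "v \<in> carrier_vec (m + m)" "v \<noteq> 0\<^sub>v (m + m)" "skew_blk N *\<^sub>v v = 0\<^sub>v (m + m)"
    using det_0_iff_vec_prod_zero[OF skew_blk_carrier[OF N]] by blast
  define y where "y = vec_first v m"
  define z where "z = vec_last v m"
  have yz: "y \<in> carrier_vec m" "z \<in> carrier_vec m" by (auto simp: y_def z_def)
  have vyz: "v = y @\<^sub>v z" using v(1) by (simp add: y_def z_def)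
  have sk: "skew_blk N = four_block_mat (0\<^sub>m m m) N (- N\<^sup>T) (0\<^sub>m m m)" using N by (simp add: skew_blk_def)
  have "(N *\<^sub>v z) @\<^sub>v (0\<^sub>m m m *\<^sub>v z - N\<^sup>T *\<^sub>v y) = 0\<^sub>v m @\<^sub>v 0\<^sub>v m"
    using v(3) skew_mult_vec[OF N yz(1) yz(2), of "0\<^sub>m m m"] unfolding sk vyz by auto
  then have e: "N *\<^sub>v z = 0\<^sub>v m" "0\<^sub>m m m *\<^sub>v z - N\<^sup>T *\<^sub>v y = 0\<^sub>v m"
    using append_vec_eq[of "N *\<^sub>v z" m "0\<^sub>v m"] N yz by auto
  have e2: "0\<^sub>v m - N\<^sup>T *\<^sub>v y = 0\<^sub>v m" using e(2) zero_mat_mult_vec'[OF yz(2)] by simp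
  have "N\<^sup>T *\<^sub>v y = 0\<^sub>v m"
  proof (rule eq_vecI)
    fix i assume "i < dim_vec (0\<^sub>v m :: complex vec)"
    then have i: "i < m" by simp
    have "(0\<^sub>v m - N\<^sup>T *\<^sub>v y) $ i = 0" unfolding e2 using i by simp
    then show "(N\<^sup>T *\<^sub>v y) $ i = 0\<^sub>v m $ i" using i N by simp
  qed (use N in simp)
  moreover have "det N\<^sup>T \<noteq> 0" using det_transpose[OF N] dN by simp
  ultimately have "y = 0\<^sub>v m" using det_0_iff_vec_prod_zero[of "N\<^sup>T" m] N yz by auto
  moreover have "z = 0\<^sub>v m" using e(1) dN det_0_iff_vec_prod_zero[OF N] yz by auto
  ultimately have "v = 0\<^sub>v (m + m)" unfolding vyz by (intro eq_vecI) auto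
  then show False using v(2) by simp
qed


lemma zero_append_vec: "0\<^sub>v a @\<^sub>v 0\<^sub>v b = (0\<^sub>v (a + b) :: complex vec)"
  by (intro eq_vecI) auto

lemma mat_vec_entry:
  fixes M :: "complex mat"
  assumes "M \<in> carrier_mat r c" "z \<in> carrier_vec c" "i < r"
  shows "(M *\<^sub>v z) $ i = (\<Sum>t<c. M $$ (i,t) * z $ t)"
  using assms by (auto simp: scalar_prod_def atLeast0LessThan)

lemma kron_N_entries:
  fixes c :: complex
  assumes "i < k - 1" "t < k"
  shows "(1 \<cdot>\<^sub>m kron_P k + c \<cdot>\<^sub>m kron_Q k) $$ (i, t) = (if t = i then 1 else 0) + c * (if t = Suc i then 1 else 0)"
  using assms by (simp add: kron_P_def kron_Q_def)

lemma kron_det: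
  fixes c :: complex
  assumes k: "k \<ge> 1"
  defines "N \<equiv> 1 \<cdot>\<^sub>m kron_P k + c \<cdot>\<^sub>m kron_Q k"
  defines "E' \<equiv> (mat k k (\<lambda>(i,j). if i = k - 1 \<and> j = k - 1 then 1 else 0) :: complex mat)"
  shows "det (four_block_mat (0\<^sub>m (k - 1) (k - 1)) N (- N\<^sup>T) E') \<noteq> 0"
proof
  have N: "N \<in> carrier_mat (k - 1) k" by (simp add: N_def kron_P_def kron_Q_def)
  have E': "E' \<in> carrier_mat k k" by (simp add: E'_def)
  have S: "four_block_mat (0\<^sub>m (k - 1) (k - 1)) N (- N\<^sup>T) E' \<in> carrier_mat (k - 1 + k) (k - 1 + k)"
    using N E' by (intro four_block_carrier_mat) auto
  assume "det (four_block_mat (0\<^sub>m (k - 1) (k - 1)) N (- N\<^sup>T) E') = 0"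
  then obtain v where v: "v \<in> carrier_vec (k - 1 + k)" "v \<noteq> 0\<^sub>v (k - 1 + k)"
    "four_block_mat (0\<^sub>m (k - 1) (k - 1)) N (- N\<^sup>T) E' *\<^sub>v v = 0\<^sub>v (k - 1 + k)"
    using det_0_iff_vec_prod_zero[OF S] by blast
  define y where "y = vec_first v (k - 1)"
  define z where "z = vec_last v k"
  have yz: "y \<in> carrier_vec (k - 1)" "z \<in> carrier_vec k" by (auto simp: y_def z_def)
  have vyz: "v = y @\<^sub>v z" using v(1) by (simp add: y_def z_def)
  have "(N *\<^sub>v z) @\<^sub>v (E' *\<^sub>v z - N\<^sup>T *\<^sub>v y) = 0\<^sub>v (k - 1) @\<^sub>v 0\<^sub>v k"
    using v(3) skew_mult_vec[OF N yz(1) yz(2) E'] unfolding vyz zero_append_vec by auto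
  moreover have Nzc: "N *\<^sub>v z \<in> carrier_vec (k - 1)" using N yz(2) by simp
  moreover have zc: "0\<^sub>v (k - 1) \<in> carrier_vec (k - 1)" by simp
  ultimately have e: "N *\<^sub>v z = 0\<^sub>v (k - 1)" "E' *\<^sub>v z - N\<^sup>T *\<^sub>v y = 0\<^sub>v k"
    using append_vec_eq[OF Nzc zc] by blast+
  have Nz: "\<And>i. i < k - 1 \<Longrightarrow> z $ i + c * z $ Suc i = 0"
  proof -
    fix i assume i: "i < k - 1"
    have "(N *\<^sub>v z) $ i = (\<Sum>t<k. N $$ (i,t) * z $ t)" by (rule mat_vec_entry[OF N yz(2) i])
    also have "\<dots> = (\<Sum>t<k. ((if t = i then 1 else 0) + c * (if t = Suc i then 1 else 0)) * z $ t)"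
      using i unfolding N_def by (intro sum.cong) (auto simp: kron_N_entries)
    also have "\<dots> = (\<Sum>t<k. (if t = i then z $ t else 0)) + (\<Sum>t<k. (if t = Suc i then c * z $ t else 0))"
      by (subst sum.distrib[symmetric], intro sum.cong) (auto simp: algebra_simps)
    also have "\<dots> = z $ i + c * z $ Suc i"
    proof -
      have "i < k" "Suc i < k" using i by auto
      then show ?thesis by (simp add: sum.delta')
    qed
    finally show "z $ i + c * z $ Suc i = 0" using e(1) i by simp
  qed
  have NTy: "\<And>t. t < k \<Longrightarrow> (E' *\<^sub>v z) $ t = (N\<^sup>T *\<^sub>v y) $ t"
  proof -
    fix t assume t: "t < k"
    have "(E' *\<^sub>v z - N\<^sup>T *\<^sub>v y) $ t = 0" unfolding e(2) using t by simp
    then show "(E' *\<^sub>v z) $ t = (N\<^sup>T *\<^sub>v y) $ t" using t N E' yz by simp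
  qed
  have Ez: "\<And>t. t < k \<Longrightarrow> (E' *\<^sub>v z) $ t = (if t = k - 1 then z $ (k - 1) else 0)"
  proof -
    fix t assume t: "t < k"
    have "(E' *\<^sub>v z) $ t = (\<Sum>l<k. E' $$ (t,l) * z $ l)" by (rule mat_vec_entry[OF E' yz(2) t])
    also have "\<dots> = (\<Sum>l<k. (if t = k - 1 \<and> l = k - 1 then 1 else 0) * z $ l)"
      using t by (intro sum.cong) (auto simp: E'_def)
    also have "\<dots> = (\<Sum>l<k. if l = k - 1 then (if t = k - 1 then z $ l else 0) else 0)"
      by (intro sum.cong) auto
    also have "\<dots> = (if t = k - 1 then z $ (k - 1) else 0)" using k by (simp add: sum.delta')
    finally show "(E' *\<^sub>v z) $ t = (if t = k - 1 then z $ (k - 1) else 0)" .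
  qed
  have NT: "\<And>t. t < k \<Longrightarrow> (N\<^sup>T *\<^sub>v y) $ t = (if t < k - 1 then y $ t else 0) + c * (if t \<ge> 1 then y $ (t - 1) else 0)"
  proof -
    fix t assume t: "t < k"
    have NT': "N\<^sup>T \<in> carrier_mat k (k - 1)" using N by simp
    have "(N\<^sup>T *\<^sub>v y) $ t = (\<Sum>l<k - 1. N\<^sup>T $$ (t,l) * y $ l)" by (rule mat_vec_entry[OF NT' yz(1) t])
    also have "\<dots> = (\<Sum>l<k - 1. ((if t = l then 1 else 0) + c * (if t = Suc l then 1 else 0)) * y $ l)"
    proof (intro sum.cong refl)
      fix l assume "l \<in> {..<k - 1}"
      then have l: "l < k - 1" by simp
      have "N\<^sup>T $$ (t,l) = N $$ (l,t)" using N t l by simp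
      also have "\<dots> = (if t = l then 1 else 0) + c * (if t = Suc l then 1 else 0)"
        unfolding N_def by (rule kron_N_entries[OF l t])
      finally show "N\<^sup>T $$ (t,l) * y $ l = ((if t = l then 1 else 0) + c * (if t = Suc l then 1 else 0)) * y $ l" by simp
    qed
    also have "\<dots> = (\<Sum>l<k - 1. (if l = t then y $ l else 0)) + (\<Sum>l<k - 1. (if l = t - 1 then (if t \<ge> 1 then c * y $ l else 0) else 0))"
      by (subst sum.distrib[symmetric], intro sum.cong) (auto simp: algebra_simps)
    also have "\<dots> = (if t < k - 1 then y $ t else 0) + c * (if t \<ge> 1 then y $ (t - 1) else 0)"
    proof -
      have "t \<ge> 1 \<Longrightarrow> t - 1 < k - 1" using t by linarith
      then show ?thesis by (simp add: sum.delta')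
    qed
    finally show "(N\<^sup>T *\<^sub>v y) $ t = (if t < k - 1 then y $ t else 0) + c * (if t \<ge> 1 then y $ (t - 1) else 0)" .
  qed
  have y0: "\<And>t. t < k - 1 \<Longrightarrow> y $ t = 0"
  proof -
    fix t show "t < k - 1 \<Longrightarrow> y $ t = 0"
    proof (induction t)
      case 0
      have "(E' *\<^sub>v z) $ 0 = (N\<^sup>T *\<^sub>v y) $ 0" using NTy 0 by simp
      then show ?case using Ez[of 0] NT[of 0] 0 by simp
    next
      case (Suc t)
      have "(E' *\<^sub>v z) $ Suc t = (N\<^sup>T *\<^sub>v y) $ Suc t" using NTy Suc.prems by simp
      then show ?case using Ez[of "Suc t"] NT[of "Suc t"] Suc by simp
    qed
  qed
  have zlast: "z $ (k - 1) = 0"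
  proof -
    have "(E' *\<^sub>v z) $ (k - 1) = (N\<^sup>T *\<^sub>v y) $ (k - 1)" using NTy k by simp
    then have "z $ (k - 1) = c * (if k - 1 \<ge> 1 then y $ (k - 1 - 1) else 0)"
      using Ez[of "k - 1"] NT[of "k - 1"] k by simp
    then show ?thesis using y0[of "k - 1 - 1"] by (cases "k - 1 \<ge> 1") auto
  qed
  have z0: "\<And>j i. i < k \<Longrightarrow> k - 1 - i = j \<Longrightarrow> z $ i = 0"
  proof -
    fix j show "\<And>i. i < k \<Longrightarrow> k - 1 - i = j \<Longrightarrow> z $ i = 0"
    proof (induction j)
      case 0 then have "i = k - 1" by simp
      then show ?case using zlast by simp
    next
      case (Suc j)
      then have i: "i < k - 1" by simp
      have "z $ Suc i = 0" using Suc.IH[of "Suc i"] Suc.prems by simp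
      then show ?case using Nz[OF i] by simp
    qed
  qed
  have "y = 0\<^sub>v (k - 1)" using y0 yz by (intro eq_vecI) auto
  moreover have "z = 0\<^sub>v k" using z0 yz by (intro eq_vecI) auto
  ultimately have "v = 0\<^sub>v (k - 1 + k)" unfolding vyz by (intro eq_vecI) auto
  then show False using v(2) by simp
qed

lemma JK_conj:
  fixes A B :: "complex mat"
  assumes JK: "JK_decomp A B bl" and A: "A \<in> carrier_mat n n" and B: "B \<in> carrier_mat n n"
  shows "\<exists>P Pi. P \<in> carrier_mat n n \<and> Pi \<in> carrier_mat n n \<and> P * Pi = 1\<^sub>m n \<and> Pi * P = 1\<^sub>m n \<and>
     n = sum_list (map bdim bl) \<and> (\<forall>b\<in>set bl. jk_valid b) \<and>
     (\<forall>\<alpha> \<beta>. P\<^sup>T * (\<alpha> \<cdot>\<^sub>m A + \<beta> \<cdot>\<^sub>m B) * P = blkdiag (map (Db \<alpha> \<beta>) bl))"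
proof -
  from JK obtain P where P: "P \<in> carrier_mat n n" and Pinv: "invertible_mat P"
    and PA: "P\<^sup>T * A * P = blkdiag (map blkA bl)" and PB: "P\<^sup>T * B * P = blkdiag (map blkB bl)"
    and val: "\<forall>b\<in>set bl. jk_valid b"
    using A unfolding JK_decomp_def by auto
  from Pinv P obtain Pi where Pi: "Pi \<in> carrier_mat n n" and PPi: "P * Pi = 1\<^sub>m n" and PiP: "Pi * P = 1\<^sub>m n"
    unfolding invertible_mat_def inverts_mat_def square_mat.simps
    by (metis carrier_matD(1) carrier_matI index_mult_mat(3) index_one_mat(3))
  have bdA: "\<And>b. dim_row (blkA b) = bdim b" "\<And>b. dim_col (blkA b) = bdim b"
    using blkA_carrier by auto
  have bdB: "\<And>b. dim_row (blkB b) = bdim b" "\<And>b. dim_col (blkB b) = bdim b"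
    using blkB_carrier by auto
  have n: "n = sum_list (map bdim bl)"
  proof -
    have "dim_row (P\<^sup>T * A * P) = n" using P A by simp
    then show ?thesis unfolding PA by (simp add: o_def bdA)
  qed
  have PMP: "P\<^sup>T * (\<alpha> \<cdot>\<^sub>m A + \<beta> \<cdot>\<^sub>m B) * P = blkdiag (map (Db \<alpha> \<beta>) bl)" for \<alpha> \<beta>
  proof -
    have "P\<^sup>T * (\<alpha> \<cdot>\<^sub>m A + \<beta> \<cdot>\<^sub>m B) * P = \<alpha> \<cdot>\<^sub>m (P\<^sup>T * A * P) + \<beta> \<cdot>\<^sub>m (P\<^sup>T * B * P)"
    proof -
      have PT: "P\<^sup>T \<in> carrier_mat n n" using P by simp
      have "P\<^sup>T * (\<alpha> \<cdot>\<^sub>m A + \<beta> \<cdot>\<^sub>m B) = \<alpha> \<cdot>\<^sub>m (P\<^sup>T * A) + \<beta> \<cdot>\<^sub>m (P\<^sup>T * B)"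
        using mult_add_distrib_mat[OF PT, of "\<alpha> \<cdot>\<^sub>m A" n "\<beta> \<cdot>\<^sub>m B"] A B
          mult_smult_distrib[OF PT A] mult_smult_distrib[OF PT B] by simp
      moreover have "(\<alpha> \<cdot>\<^sub>m (P\<^sup>T * A) + \<beta> \<cdot>\<^sub>m (P\<^sup>T * B)) * P = \<alpha> \<cdot>\<^sub>m (P\<^sup>T * A * P) + \<beta> \<cdot>\<^sub>m (P\<^sup>T * B * P)"
      proof -
        have c1: "P\<^sup>T * A \<in> carrier_mat n n" "P\<^sup>T * B \<in> carrier_mat n n" using PT A B by auto
        show ?thesis using add_mult_distrib_mat[of "\<alpha> \<cdot>\<^sub>m (P\<^sup>T * A)" n n "\<beta> \<cdot>\<^sub>m (P\<^sup>T * B)" P n] c1 P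
          mult_smult_assoc_mat[OF c1(1) P] mult_smult_assoc_mat[OF c1(2) P] by simp
      qed
      ultimately show ?thesis by simp
    qed
    also have "\<dots> = blkdiag (map (\<lambda>b. \<alpha> \<cdot>\<^sub>m blkA b) bl) + blkdiag (map (\<lambda>b. \<beta> \<cdot>\<^sub>m blkB b) bl)"
      unfolding PA PB blkdiag_smult by (simp add: o_def)
    also have "\<dots> = blkdiag (map (\<lambda>b. \<alpha> \<cdot>\<^sub>m blkA b + \<beta> \<cdot>\<^sub>m blkB b) bl)"
      by (rule blkdiag_map_add) (simp add: bdA bdB)
    also have "\<dots> = blkdiag (map (Db \<alpha> \<beta>) bl)" by (simp add: Db_eq)
    finally show ?thesis .
  qed
  show ?thesis using P Pi PPi PiP n val PMP by blast
qed

lemma conj_back: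
  fixes X Y P Pi :: "complex mat"
  assumes P: "P \<in> carrier_mat n n" and Pi: "Pi \<in> carrier_mat n n" and PPi: "P * Pi = 1\<^sub>m n"
    and X: "X \<in> carrier_mat n n" and XY: "P\<^sup>T * X * P = Y"
  shows "X = Pi\<^sup>T * Y * Pi"
proof -
  have PT: "P\<^sup>T \<in> carrier_mat n n" "Pi\<^sup>T \<in> carrier_mat n n" using P Pi by auto
  have PiPT: "Pi\<^sup>T * P\<^sup>T = 1\<^sub>m n" using transpose_mult[OF P Pi] PPi by simp
  have XP: "X * P \<in> carrier_mat n n" using X P by simp
  have "Pi\<^sup>T * Y * Pi = Pi\<^sup>T * (P\<^sup>T * (X * P)) * Pi" unfolding XY[symmetric] using assoc_mult_mat[OF PT(1) X P] by simp
  also have "Pi\<^sup>T * (P\<^sup>T * (X * P)) = (Pi\<^sup>T * P\<^sup>T) * (X * P)" using assoc_mult_mat[OF PT(2) PT(1) XP] by simp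
  also have "\<dots> = X * P" unfolding PiPT by (rule left_mult_one_mat[OF XP])
  also have "X * P * Pi = X * (P * Pi)" by (rule assoc_mult_mat[OF X P Pi])
  also have "\<dots> = X" unfolding PPi by (rule right_mult_one_mat[OF X])
  finally show ?thesis by simp
qed

definition EGf :: "jkblock \<Rightarrow> complex mat" where
  "EGf b = (case b of Kron k \<Rightarrow> mat (bdim b) 1 (\<lambda>(i,j). if i = bdim b - 1 then 1 else 0) | _ \<Rightarrow> 0\<^sub>m (bdim b) 0)"
definition EHf :: "jkblock \<Rightarrow> complex mat" where
  "EHf b = (case b of Kron k \<Rightarrow> mat 1 (bdim b) (\<lambda>(i,j). if j = bdim b - 1 then 1 else 0) | _ \<Rightarrow> 0\<^sub>m 0 (bdim b))"

lemma EGf_carrier: "EGf b \<in> carrier_mat (bdim b) (isK b)" by (cases b) (auto simp: EGf_def isK_def)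
lemma EHf_carrier: "EHf b \<in> carrier_mat (isK b) (bdim b)" by (cases b) (auto simp: EHf_def isK_def)
lemma EGf_dims[simp]: "dim_row (EGf b) = bdim b" "dim_col (EGf b) = isK b" using EGf_carrier[of b] by auto
lemma EHf_dims[simp]: "dim_row (EHf b) = isK b" "dim_col (EHf b) = bdim b" using EHf_carrier[of b] by auto

lemma block_det_nonzero:
  assumes v: "jk_valid b" and nl: "\<And>\<mu> m. b = Jord \<mu> m \<Longrightarrow> \<mu> \<noteq> lam0"
  shows "det (Db 1 (-lam0) b + EGf b * EHf b) \<noteq> 0"
proof (cases b)
  case (Kron k)
  have k: "k \<ge> 1" using v Kron by simp
  define N where "N = 1 \<cdot>\<^sub>m kron_P k + (-lam0) \<cdot>\<^sub>m kron_Q k"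
  define E' :: "complex mat" where "E' = mat k k (\<lambda>(i,j). if i = k - 1 \<and> j = k - 1 then 1 else 0)"
  have N: "N \<in> carrier_mat (k - 1) k" by (simp add: N_def kron_P_def kron_Q_def)
  have Nd: "dim_row N = k - 1" "dim_col N = k" using N by auto
  have E': "E' \<in> carrier_mat k k" by (simp add: E'_def)
  have D: "Db 1 (-lam0) b = four_block_mat (0\<^sub>m (k - 1) (k - 1)) N (- N\<^sup>T) (0\<^sub>m k k)"
    unfolding Kron Db_def XA.simps XB.simps N_def[symmetric] skew_blk_def Nd ..
  have E: "EGf b * EHf b = four_block_mat (0\<^sub>m (k - 1) (k - 1)) (0\<^sub>m (k - 1) k) (0\<^sub>m k (k - 1)) E'"
  proof (rule eq_matI)
    fix i j assume "i < dim_row (four_block_mat (0\<^sub>m (k - 1) (k - 1)) (0\<^sub>m (k - 1) k) (0\<^sub>m k (k - 1)) E')"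
      "j < dim_col (four_block_mat (0\<^sub>m (k - 1) (k - 1)) (0\<^sub>m (k - 1) k) (0\<^sub>m k (k - 1)) E')"
    then have ij: "i < k - 1 + k" "j < k - 1 + k" using E' by auto
    have EE: "(EGf b * EHf b) $$ (i,j) = (if i = k - 1 + k - 1 \<and> j = k - 1 + k - 1 then 1 else 0)"
      using ij k by (auto simp: Kron EGf_def EHf_def bdim_def scalar_prod_def)
    have RR: "four_block_mat (0\<^sub>m (k - 1) (k - 1)) (0\<^sub>m (k - 1) k) (0\<^sub>m k (k - 1)) E' $$ (i,j)
       = (if i = k - 1 + k - 1 \<and> j = k - 1 + k - 1 then 1 else 0)"
      using ij k E' by (simp add: E'_def) (auto)
    show "(EGf b * EHf b) $$ (i,j) = four_block_mat (0\<^sub>m (k - 1) (k - 1)) (0\<^sub>m (k - 1) k) (0\<^sub>m k (k - 1)) E' $$ (i,j)"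
      unfolding EE RR ..
  qed (use E' in \<open>auto simp: Kron bdim_def\<close>)
  have "Db 1 (-lam0) b + EGf b * EHf b = four_block_mat (0\<^sub>m (k - 1) (k - 1) + 0\<^sub>m (k - 1) (k - 1)) (N + 0\<^sub>m (k - 1) k)
      (- N\<^sup>T + 0\<^sub>m k (k - 1)) (0\<^sub>m k k + E')"
    unfolding D E by (rule add_four_block_mat) (use N E' in auto)
  also have "\<dots> = four_block_mat (0\<^sub>m (k - 1) (k - 1)) N (- N\<^sup>T) E'"
    using N E' by simp
  finally have "Db 1 (-lam0) b + EGf b * EHf b = four_block_mat (0\<^sub>m (k - 1) (k - 1)) N (- N\<^sup>T) E'" .
  then show ?thesis using kron_det[OF k, of "-lam0"] unfolding N_def E'_def by simp
next
  case (Jord \<mu> m)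
  have ne: "\<mu> \<noteq> lam0" using nl Jord by simp
  define N where "N = 1 \<cdot>\<^sub>m jordan_block m \<mu> + (-lam0) \<cdot>\<^sub>m (1\<^sub>m m :: complex mat)"
  have N: "N \<in> carrier_mat m m" by (simp add: N_def)
  have E0: "EGf b * EHf b = 0\<^sub>m (m + m) (m + m)"
    by (intro eq_matI) (auto simp: Jord EGf_def EHf_def bdim_def scalar_prod_def)
  have "Db 1 (-lam0) b + EGf b * EHf b = skew_blk N"
    unfolding E0 using skew_blk_carrier[OF N] by (simp add: Jord Db_def N_def)
  moreover have "det N \<noteq> 0"
    by (rule det_ut_nonzero[OF N]) (use ne in \<open>auto simp: N_def\<close>)
  ultimately show ?thesis using det_skew_nonzero[OF N] by simp
next
  case (JordInf m)
  define N where "N = 1 \<cdot>\<^sub>m (1\<^sub>m m :: complex mat) + (-lam0) \<cdot>\<^sub>m jordan_block m 0"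
  have N: "N \<in> carrier_mat m m" by (simp add: N_def)
  have E0: "EGf b * EHf b = 0\<^sub>m (m + m) (m + m)"
    by (intro eq_matI) (auto simp: JordInf EGf_def EHf_def bdim_def scalar_prod_def)
  have "Db 1 (-lam0) b + EGf b * EHf b = skew_blk N"
    unfolding E0 using skew_blk_carrier[OF N] by (simp add: JordInf Db_def N_def)
  moreover have "det N \<noteq> 0"
    by (rule det_ut_nonzero[OF N]) (auto simp: N_def)
  ultimately show ?thesis using det_skew_nonzero[OF N] by simp
qed


lemma smult_one_mat': "1 \<cdot>\<^sub>m (A :: complex mat) = A" by (intro eq_matI) auto

lemma nonvanish:
  fixes A B :: "complex mat"
  assumes JK: "JK_decomp A B bl" and A: "A \<in> carrier_mat n n" and B: "B \<in> carrier_mat n n"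
    and nl: "\<And>\<mu> m. Jord \<mu> m \<in> set bl \<Longrightarrow> \<mu> \<noteq> lam0"
  shows "\<exists>G H. G \<in> carrier_mat n (size (kron_inv bl)) \<and> H \<in> carrier_mat (size (kron_inv bl)) n \<and>
     det (A + (-lam0) \<cdot>\<^sub>m B + G * H) \<noteq> 0"
proof -
  obtain P Pi where P: "P \<in> carrier_mat n n" and Pi: "Pi \<in> carrier_mat n n" and PPi: "P * Pi = 1\<^sub>m n"
    and PiP: "Pi * P = 1\<^sub>m n" and n: "n = sum_list (map bdim bl)" and val: "\<forall>b\<in>set bl. jk_valid b"
    and PMP: "\<And>\<alpha> \<beta>. P\<^sup>T * (\<alpha> \<cdot>\<^sub>m A + \<beta> \<cdot>\<^sub>m B) * P = blkdiag (map (Db \<alpha> \<beta>) bl)"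
    using JK_conj[OF JK A B] by blast
  let ?q = "size (kron_inv bl)"
  let ?M = "A + (-lam0) \<cdot>\<^sub>m B"
  let ?D = "blkdiag (map (Db 1 (-lam0)) bl)"
  have M: "?M \<in> carrier_mat n n" using A B by simp
  have PMP': "P\<^sup>T * ?M * P = ?D" using PMP[of 1 "-lam0"] by (simp add: smult_one_mat')
  have q: "?q = sum_list (map isK bl)" by (rule kron_inv_size)
  let ?EG = "blkdiag (map EGf bl)" and ?EH = "blkdiag (map EHf bl)"
  have EG: "?EG \<in> carrier_mat n ?q" unfolding n q by (intro carrier_matI) (simp_all add: o_def)
  have EH: "?EH \<in> carrier_mat ?q n" unfolding n q by (intro carrier_matI) (simp_all add: o_def)
  have D: "?D \<in> carrier_mat n n" unfolding n by (intro carrier_matI) (simp_all add: o_def)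
  have EGH: "?EG * ?EH = blkdiag (map (\<lambda>b. EGf b * EHf b) bl)"
    by (rule blkdiag_map_mult) simp
  have DE: "?D + ?EG * ?EH = blkdiag (map (\<lambda>b. Db 1 (-lam0) b + EGf b * EHf b) bl)"
    unfolding EGH by (rule blkdiag_map_add) simp
  have detDE: "det (?D + ?EG * ?EH) \<noteq> 0"
  proof -
    have "det (?D + ?EG * ?EH) = prod_list (map det (map (\<lambda>b. Db 1 (-lam0) b + EGf b * EHf b) bl))"
      unfolding DE by (rule blkdiag_det) auto
    moreover have "0 \<notin> set (map det (map (\<lambda>b. Db 1 (-lam0) b + EGf b * EHf b) bl))"
      using block_det_nonzero val nl by fastforce
    ultimately show ?thesis by (simp add: prod_list_zero_iff)
  qed
  have Mback: "?M = Pi\<^sup>T * ?D * Pi" by (rule conj_back[OF P Pi PPi M PMP'])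
  define G where "G = Pi\<^sup>T * ?EG"
  define H where "H = ?EH * Pi"
  have PiT: "Pi\<^sup>T \<in> carrier_mat n n" using Pi by simp
  have G: "G \<in> carrier_mat n ?q" using PiT EG by (simp add: G_def)
  have H: "H \<in> carrier_mat ?q n" using EH Pi by (simp add: H_def)
  have EGHc: "?EG * ?EH \<in> carrier_mat n n" using EG EH by simp
  have GH: "G * H = Pi\<^sup>T * (?EG * ?EH) * Pi"
  proof -
    have "G * H = Pi\<^sup>T * (?EG * (?EH * Pi))" unfolding G_def H_def
      using assoc_mult_mat[OF PiT EG, of "?EH * Pi" n] EH Pi by simp
    also have "?EG * (?EH * Pi) = (?EG * ?EH) * Pi" using assoc_mult_mat[OF EG EH Pi] by simp
    also have "Pi\<^sup>T * (?EG * ?EH * Pi) = Pi\<^sup>T * (?EG * ?EH) * Pi"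
      using assoc_mult_mat[OF PiT EGHc Pi] by simp
    finally show ?thesis .
  qed
  have sum: "?M + G * H = Pi\<^sup>T * (?D + ?EG * ?EH) * Pi"
  proof -
    have "Pi\<^sup>T * (?D + ?EG * ?EH) = Pi\<^sup>T * ?D + Pi\<^sup>T * (?EG * ?EH)"
      by (rule mult_add_distrib_mat[OF PiT D EGHc])
    moreover have "(Pi\<^sup>T * ?D + Pi\<^sup>T * (?EG * ?EH)) * Pi = Pi\<^sup>T * ?D * Pi + Pi\<^sup>T * (?EG * ?EH) * Pi"
      by (rule add_mult_distrib_mat[of _ n n]) (use PiT D EGHc Pi in auto)
    ultimately show ?thesis unfolding GH using Mback by simp
  qed
  have DEc: "?D + ?EG * ?EH \<in> carrier_mat n n" using D EGHc by simp
  have "det (?M + G * H) = det (Pi\<^sup>T) * det (?D + ?EG * ?EH) * det Pi"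
    unfolding sum using det_mult[OF PiT DEc] det_mult[of "Pi\<^sup>T * (?D + ?EG * ?EH)" n Pi] PiT DEc Pi by simp
  moreover have "det Pi \<noteq> 0"
  proof -
    have "det Pi * det P = 1" using det_mult[OF Pi P] PiP by simp
    then show ?thesis by auto
  qed
  moreover have "det (Pi\<^sup>T) \<noteq> 0" using \<open>det Pi \<noteq> 0\<close> det_transpose[OF Pi] by simp
  ultimately have "det (?M + G * H) \<noteq> 0" using detDE by simp
  then show ?thesis using G H by blast
qed

lemma map_filter_append': "List.map_filter f (xs @ ys) = List.map_filter f xs @ List.map_filter f ys"
  by (simp add: List.map_filter_def)

lemma set_map_filter': "set (List.map_filter f xs) = {y. \<exists>x\<in>set xs. f x = Some y}"
  by (force simp: List.map_filter_def)

lemma kron_inv_append: "kron_inv (bl1 @ bl2) = kron_inv bl1 + kron_inv bl2"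
  by (simp add: kron_inv_def map_filter_append')

lemma jord_inv_append:
  assumes disj: "\<And>b1 b2. b1 \<in> set bl1 \<Longrightarrow> b2 \<in> set bl2 \<Longrightarrow> jord_ev b1 \<noteq> None \<Longrightarrow> jord_ev b1 \<noteq> jord_ev b2"
  shows "jord_inv (bl1 @ bl2) = jord_inv bl1 + jord_inv bl2"
proof -
  define E1 where "E1 = set (List.map_filter jord_ev bl1)"
  define E2 where "E2 = set (List.map_filter jord_ev bl2)"
  define F where "F = (\<lambda>bl e. mset (map jord_size (filter (\<lambda>b. jord_ev b = Some e) bl)))"
  have E12: "E1 \<inter> E2 = {}" unfolding E1_def E2_def set_map_filter' using disj by fastforce
  have "jord_inv (bl1 @ bl2) = image_mset (F (bl1 @ bl2)) (mset_set (E1 \<union> E2))"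
    unfolding jord_inv_def F_def E1_def E2_def map_filter_append' by simp
  also have "mset_set (E1 \<union> E2) = mset_set E1 + mset_set E2"
    by (rule mset_set_Union) (use E12 in \<open>auto simp: E1_def E2_def\<close>)
  also have "image_mset (F (bl1 @ bl2)) (mset_set E1 + mset_set E2) =
      image_mset (F (bl1 @ bl2)) (mset_set E1) + image_mset (F (bl1 @ bl2)) (mset_set E2)" by simp
  also have "image_mset (F (bl1 @ bl2)) (mset_set E1) = image_mset (F bl1) (mset_set E1)"
  proof (rule image_mset_cong)
    fix e assume "e \<in># mset_set E1"
    then have "e \<in> E1" by (simp add: E1_def)
    then have "e \<notin> E2" using E12 by auto
    then have f2: "filter (\<lambda>b. jord_ev b = Some e) bl2 = []"
      unfolding E2_def set_map_filter' filter_empty_conv by blast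
    show "F (bl1 @ bl2) e = F bl1 e" unfolding F_def filter_append f2 by simp
  qed
  also have "image_mset (F (bl1 @ bl2)) (mset_set E2) = image_mset (F bl2) (mset_set E2)"
  proof (rule image_mset_cong)
    fix e assume "e \<in># mset_set E2"
    then have "e \<in> E2" by (simp add: E2_def)
    then have "e \<notin> E1" using E12 by auto
    then have f1: "filter (\<lambda>b. jord_ev b = Some e) bl1 = []"
      unfolding E1_def set_map_filter' filter_empty_conv by blast
    show "F (bl1 @ bl2) e = F bl2 e" unfolding F_def filter_append f1 by simp
  qed
  finally show ?thesis unfolding jord_inv_def F_def E1_def E2_def .
qed

lemma diag2_mult:
  fixes A1 A2 B1 B2 :: "complex mat"
  assumes A1: "A1 \<in> carrier_mat r1 c1" and A2: "A2 \<in> carrier_mat r2 c2"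
    and B1: "B1 \<in> carrier_mat c1 d1" and B2: "B2 \<in> carrier_mat c2 d2"
  shows "four_block_mat A1 (0\<^sub>m r1 c2) (0\<^sub>m r2 c1) A2 * four_block_mat B1 (0\<^sub>m c1 d2) (0\<^sub>m c2 d1) B2
    = four_block_mat (A1 * B1) (0\<^sub>m r1 d2) (0\<^sub>m r2 d1) (A2 * B2)"
proof -
  have "four_block_mat A1 (0\<^sub>m r1 c2) (0\<^sub>m r2 c1) A2 * four_block_mat B1 (0\<^sub>m c1 d2) (0\<^sub>m c2 d1) B2
    = four_block_mat (A1 * B1 + 0\<^sub>m r1 c2 * 0\<^sub>m c2 d1) (A1 * 0\<^sub>m c1 d2 + 0\<^sub>m r1 c2 * B2)
        (0\<^sub>m r2 c1 * B1 + A2 * 0\<^sub>m c2 d1) (0\<^sub>m r2 c1 * 0\<^sub>m c1 d2 + A2 * B2)"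
    by (rule mult_four_block_mat[OF A1 _ _ A2 B1 _ _ B2]) auto
  also have "\<dots> = four_block_mat (A1 * B1) (0\<^sub>m r1 d2) (0\<^sub>m r2 d1) (A2 * B2)"
  proof -
    have z1: "0\<^sub>m r1 c2 * 0\<^sub>m c2 d1 = (0\<^sub>m r1 d1 :: complex mat)" by (rule left_mult_zero_mat) auto
    have z2: "A1 * 0\<^sub>m c1 d2 = 0\<^sub>m r1 d2" by (rule right_mult_zero_mat[OF A1])
    have z3: "0\<^sub>m r1 c2 * B2 = 0\<^sub>m r1 d2" by (rule left_mult_zero_mat[OF B2])
    have z4: "0\<^sub>m r2 c1 * B1 = 0\<^sub>m r2 d1" by (rule left_mult_zero_mat[OF B1])
    have z5: "A2 * 0\<^sub>m c2 d1 = 0\<^sub>m r2 d1" by (rule right_mult_zero_mat[OF A2])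
    have z6: "0\<^sub>m r2 c1 * 0\<^sub>m c1 d2 = (0\<^sub>m r2 d2 :: complex mat)" by (rule left_mult_zero_mat) auto
    have a1: "A1 * B1 + 0\<^sub>m r1 d1 = A1 * B1" by (rule right_add_zero_mat) (use A1 B1 in auto)
    have a4: "0\<^sub>m r2 d2 + A2 * B2 = A2 * B2" by (rule left_add_zero_mat) (use A2 B2 in auto)
    show ?thesis unfolding z1 z2 z3 z4 z5 z6 a1 a4 zero_add_zero ..
  qed
  finally show ?thesis .
qed

lemma JK_append:
  fixes A1 A2 B1 B2 :: "complex mat"
  assumes J1: "JK_decomp A1 B1 bl1" and J2: "JK_decomp A2 B2 bl2"
    and A1: "A1 \<in> carrier_mat n1 n1" and B1: "B1 \<in> carrier_mat n1 n1"
    and A2: "A2 \<in> carrier_mat n2 n2" and B2: "B2 \<in> carrier_mat n2 n2"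
  shows "JK_decomp (four_block_mat A1 (0\<^sub>m n1 n2) (0\<^sub>m n2 n1) A2) (four_block_mat B1 (0\<^sub>m n1 n2) (0\<^sub>m n2 n1) B2) (bl1 @ bl2)"
proof -
  from J1 obtain P1 where P1: "P1 \<in> carrier_mat n1 n1" "invertible_mat P1"
    "P1\<^sup>T * A1 * P1 = blkdiag (map blkA bl1)" "P1\<^sup>T * B1 * P1 = blkdiag (map blkB bl1)"
    and v1: "\<forall>b\<in>set bl1. jk_valid b"
    using A1 unfolding JK_decomp_def by auto
  from J2 obtain P2 where P2: "P2 \<in> carrier_mat n2 n2" "invertible_mat P2"
    "P2\<^sup>T * A2 * P2 = blkdiag (map blkA bl2)" "P2\<^sup>T * B2 * P2 = blkdiag (map blkB bl2)"
    and v2: "\<forall>b\<in>set bl2. jk_valid b"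
    using A2 unfolding JK_decomp_def by auto
  from P1 obtain Q1 where Q1: "Q1 \<in> carrier_mat n1 n1" "P1 * Q1 = 1\<^sub>m n1" "Q1 * P1 = 1\<^sub>m n1"
    unfolding invertible_mat_def inverts_mat_def square_mat.simps
    by (metis carrier_matD(1) carrier_matI index_mult_mat(3) index_one_mat(3))
  from P2 obtain Q2 where Q2: "Q2 \<in> carrier_mat n2 n2" "P2 * Q2 = 1\<^sub>m n2" "Q2 * P2 = 1\<^sub>m n2"
    unfolding invertible_mat_def inverts_mat_def square_mat.simps
    by (metis carrier_matD(1) carrier_matI index_mult_mat(3) index_one_mat(3))
  define P where "P = four_block_mat P1 (0\<^sub>m n1 n2) (0\<^sub>m n2 n1) P2"
  define Q where "Q = four_block_mat Q1 (0\<^sub>m n1 n2) (0\<^sub>m n2 n1) Q2"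
  have P: "P \<in> carrier_mat (n1 + n2) (n1 + n2)" unfolding P_def using P1 P2 by simp
  have PQ: "P * Q = 1\<^sub>m (n1 + n2)" unfolding P_def Q_def diag2_mult[OF P1(1) P2(1) Q1(1) Q2(1)]
    unfolding Q1 Q2 by simp
  have QP: "Q * P = 1\<^sub>m (n1 + n2)" unfolding P_def Q_def diag2_mult[OF Q1(1) Q2(1) P1(1) P2(1)]
    unfolding Q1 Q2 by simp
  have Qc: "Q \<in> carrier_mat (n1 + n2) (n1 + n2)" unfolding Q_def using Q1 Q2 by simp
  have Pinv: "invertible_mat P"
    unfolding invertible_mat_def inverts_mat_def
  proof (intro conjI exI[of _ Q])
    show "square_mat P" using P by simp
    show "P * Q = 1\<^sub>m (dim_row P)" using PQ P by simp
    show "Q * P = 1\<^sub>m (dim_row Q)" using QP Qc by simp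
  qed
  have PT: "P\<^sup>T = four_block_mat P1\<^sup>T (0\<^sub>m n1 n2) (0\<^sub>m n2 n1) P2\<^sup>T"
    unfolding P_def using transpose_four_block_mat[OF P1(1) _ _ P2(1), of "0\<^sub>m n1 n2" "0\<^sub>m n2 n1"] by simp
  have PT1: "P1\<^sup>T \<in> carrier_mat n1 n1" "P2\<^sup>T \<in> carrier_mat n2 n2" using P1 P2 by auto
  have conj: "P\<^sup>T * four_block_mat X1 (0\<^sub>m n1 n2) (0\<^sub>m n2 n1) X2 * P =
      four_block_mat (P1\<^sup>T * X1 * P1) (0\<^sub>m n1 n2) (0\<^sub>m n2 n1) (P2\<^sup>T * X2 * P2)"
    if X1: "X1 \<in> carrier_mat n1 n1" and X2: "X2 \<in> carrier_mat n2 n2" for X1 X2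
    unfolding PT unfolding P_def diag2_mult[OF PT1(1) PT1(2) X1 X2]
    using diag2_mult[of "P1\<^sup>T * X1" n1 n1 "P2\<^sup>T * X2" n2 n2 P1 n1 P2 n2] PT1 X1 X2 P1 P2 by simp
  have "P1\<^sup>T * A1 * P1 \<in> carrier_mat n1 n1" using P1(1) A1 by simp
  then have dA1: "dim_row (blkdiag (map blkA bl1)) = n1" "dim_col (blkdiag (map blkA bl1)) = n1"
    unfolding P1(3) by (metis carrier_matD(1), metis carrier_matD(2))
  have "P2\<^sup>T * A2 * P2 \<in> carrier_mat n2 n2" using P2(1) A2 by simp
  then have dA2: "dim_row (blkdiag (map blkA bl2)) = n2" "dim_col (blkdiag (map blkA bl2)) = n2"
    unfolding P2(3) by (metis carrier_matD(1), metis carrier_matD(2))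
  have "P1\<^sup>T * B1 * P1 \<in> carrier_mat n1 n1" using P1(1) B1 by simp
  then have dB1: "dim_row (blkdiag (map blkB bl1)) = n1" "dim_col (blkdiag (map blkB bl1)) = n1"
    unfolding P1(4) by (metis carrier_matD(1), metis carrier_matD(2))
  have "P2\<^sup>T * B2 * P2 \<in> carrier_mat n2 n2" using P2(1) B2 by simp
  then have dB2: "dim_row (blkdiag (map blkB bl2)) = n2" "dim_col (blkdiag (map blkB bl2)) = n2"
    unfolding P2(4) by (metis carrier_matD(1), metis carrier_matD(2))
  have eA: "P\<^sup>T * four_block_mat A1 (0\<^sub>m n1 n2) (0\<^sub>m n2 n1) A2 * P = blkdiag (map blkA (bl1 @ bl2))"
    unfolding conj[OF A1 A2] P1(3) P2(3) map_append blkdiag_append dA1 dA2 ..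
  have eB: "P\<^sup>T * four_block_mat B1 (0\<^sub>m n1 n2) (0\<^sub>m n2 n1) B2 * P = blkdiag (map blkB (bl1 @ bl2))"
    unfolding conj[OF B1 B2] P1(4) P2(4) map_append blkdiag_append dB1 dB2 ..
  show ?thesis unfolding JK_decomp_def using v1 v2 P Pinv eA eB A1 A2 by auto
qed

definition pr :: "nat \<Rightarrow> nat \<Rightarrow> complex vec \<Rightarrow> complex vec" where
  "pr s m x = vec m (\<lambda>k. x $ (s + k))"

lemma coadj_carrier: "coadj_form m cc x \<in> carrier_mat m m"
  by (simp add: coadj_form_def)

lemma coadj_dims[simp]: "dim_row (coadj_form m cc x) = m" "dim_col (coadj_form m cc x) = m"
  by (simp_all add: coadj_form_def)

lemma coadj_entry: "i < m \<Longrightarrow> j < m \<Longrightarrow> coadj_form m cc x $$ (i,j) = (\<Sum>k<m. x $ k * cc i j k)"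
  by (simp add: coadj_form_def)

lemma coadj_lin: "coadj_form m cc (vec m (\<lambda>i. x $ i + t * a $ i)) = coadj_form m cc x + t \<cdot>\<^sub>m coadj_form m cc a"
  by (intro eq_matI) (auto simp: coadj_form_def sum.distrib sum_distrib_left algebra_simps)

definition Fpol :: "nat \<Rightarrow> (nat \<Rightarrow> nat \<Rightarrow> nat \<Rightarrow> complex) \<Rightarrow> complex mat \<Rightarrow> complex vec \<Rightarrow> complex vec \<Rightarrow> complex poly" where
  "Fpol m cc C x a = det (mat m m (\<lambda>(i,j). [: coadj_form m cc x $$ (i,j) + C $$ (i,j), - (coadj_form m cc a $$ (i,j)) :]))"

lemma Fpol_eval:
  assumes C: "C \<in> carrier_mat m m"
  shows "poly (Fpol m cc C x a) \<mu> = det (coadj_form m cc x + (-\<mu>) \<cdot>\<^sub>m coadj_form m cc a + C)"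
proof -
  let ?M = "mat m m (\<lambda>(i,j). [: coadj_form m cc x $$ (i,j) + C $$ (i,j), - (coadj_form m cc a $$ (i,j)) :])"
  have "poly (Fpol m cc C x a) \<mu> = det (map_mat (\<lambda>p. poly p \<mu>) ?M)"
    unfolding Fpol_def by (rule comm_ring_hom.hom_det[OF poly_hom.comm_ring_hom_axioms, symmetric])
  also have "map_mat (\<lambda>p. poly p \<mu>) ?M = coadj_form m cc x + (-\<mu>) \<cdot>\<^sub>m coadj_form m cc a + C"
    using C by (intro eq_matI) (auto simp: algebra_simps)
  finally show ?thesis .
qed

lemma Fpol_degree: "degree (Fpol m cc C x a) \<le> m"
proof -
  have "degree (Fpol m cc C x a) \<le> 1 * m"
    unfolding Fpol_def by (rule degree_det_le) auto
  then show ?thesis by simp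
qed

lemma Fpol_shift:
  assumes C: "C \<in> carrier_mat m m"
  shows "Fpol m cc C (vec m (\<lambda>i. x $ i + t * a $ i)) a = pcompose (Fpol m cc C x a) [:-t, 1:]"
proof -
  have "poly (Fpol m cc C (vec m (\<lambda>i. x $ i + t * a $ i)) a) \<mu> = poly (pcompose (Fpol m cc C x a) [:-t, 1:]) \<mu>" for \<mu>
  proof -
    have "poly (Fpol m cc C (vec m (\<lambda>i. x $ i + t * a $ i)) a) \<mu> =
      det (coadj_form m cc x + t \<cdot>\<^sub>m coadj_form m cc a + (-\<mu>) \<cdot>\<^sub>m coadj_form m cc a + C)"
      unfolding Fpol_eval[OF C] coadj_lin ..
    also have "coadj_form m cc x + t \<cdot>\<^sub>m coadj_form m cc a + (-\<mu>) \<cdot>\<^sub>m coadj_form m cc a + C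
        = coadj_form m cc x + (-(\<mu> - t)) \<cdot>\<^sub>m coadj_form m cc a + C"
      using C by (intro eq_matI) (auto simp: algebra_simps)
    also have "det \<dots> = poly (Fpol m cc C x a) (\<mu> - t)" unfolding Fpol_eval[OF C] ..
    also have "\<dots> = poly (pcompose (Fpol m cc C x a) [:-t, 1:]) \<mu>" by (simp add: poly_pcompose)
    finally show ?thesis .
  qed
  then show ?thesis using poly_eq_poly_eq_iff by blast
qed

lemma pf_var1': "i < n \<Longrightarrow> (\<lambda>p. fst p $ i) \<in> polyfun n"
proof -
  assume i: "i < n"
  have e: "(\<lambda>p::complex vec \<times> complex vec. fst p $ i) = (\<lambda>(x,a). x $ i)" by (auto simp: fun_eq_iff)
  show ?thesis unfolding e by (rule pf_var1[OF i])
qed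
lemma pf_var2': "i < n \<Longrightarrow> (\<lambda>p. snd p $ i) \<in> polyfun n"
proof -
  assume i: "i < n"
  have e: "(\<lambda>p::complex vec \<times> complex vec. snd p $ i) = (\<lambda>(x,a). a $ i)" by (auto simp: fun_eq_iff)
  show ?thesis unfolding e by (rule pf_var2[OF i])
qed

lemma pf_coadj_fst:
  assumes "s + m \<le> n" "i < m" "j < m"
  shows "(\<lambda>p. coadj_form m cc (pr s m (fst p)) $$ (i,j)) \<in> polyfun n"
proof -
  have "(\<lambda>p. coadj_form m cc (pr s m (fst p)) $$ (i,j)) = (\<lambda>p. \<Sum>k<m. fst p $ (s + k) * cc i j k)"
    using assms by (simp add: coadj_entry pr_def)
  also have "\<dots> \<in> polyfun n"
    by (rule pf_sum, simp, rule pf_mult[OF _ pf_const], rule pf_var1') (use assms in auto)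
  finally show ?thesis .
qed

lemma pf_coadj_snd:
  assumes "s + m \<le> n" "i < m" "j < m"
  shows "(\<lambda>p. coadj_form m cc (pr s m (snd p)) $$ (i,j)) \<in> polyfun n"
proof -
  have "(\<lambda>p. coadj_form m cc (pr s m (snd p)) $$ (i,j)) = (\<lambda>p. \<Sum>k<m. snd p $ (s + k) * cc i j k)"
    using assms by (simp add: coadj_entry pr_def)
  also have "\<dots> \<in> polyfun n"
    by (rule pf_sum, simp, rule pf_mult[OF _ pf_const], rule pf_var2') (use assms in auto)
  finally show ?thesis .
qed

lemma PC_Fpol:
  assumes "s + m \<le> n"
  shows "PC n (\<lambda>p. Fpol m cc C (pr s m (fst p)) (pr s m (snd p)))"
  unfolding Fpol_def
proof (rule PC_det)
  fix i j assume ij: "i < m" "j < m"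
  show "PC n (\<lambda>p. mat m m (\<lambda>(i,j). [: coadj_form m cc (pr s m (fst p)) $$ (i,j) + C $$ (i,j),
      - (coadj_form m cc (pr s m (snd p)) $$ (i,j)) :]) $$ (i,j))"
    using ij PC_lin[OF pf_add[OF pf_coadj_fst[OF assms ij] pf_const] pf_neg[OF pf_coadj_snd[OF assms ij]]]
    by simp
qed simp

lemma pf_g:
  assumes "s + m \<le> n" and C: "C \<in> carrier_mat m m"
  shows "(\<lambda>p. det (coadj_form m cc (pr s m (snd p)) + C)) \<in> polyfun n"
  by (rule pf_det[of _ m]) (use C in \<open>auto intro!: pf_add[OF pf_coadj_snd[OF assms(1)] pf_const]\<close>)

lemma pf_coeff: "PC n F \<Longrightarrow> (\<lambda>p. coeff (F p) k) \<in> polyfun n"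
  unfolding PC_def by blast

lemma pf_if: "(\<lambda>p. f p) \<in> polyfun n \<Longrightarrow> (\<lambda>p. g p) \<in> polyfun n \<Longrightarrow> (\<lambda>p. if P then f p else g p) \<in> polyfun n"
  by (cases P) simp_all

lemma pf_res:
  assumes F: "PC n F" and G: "PC n G"
  shows "(\<lambda>p. det (sylvester_mat_sub d1 d2 (F p) (G p))) \<in> polyfun n"
proof (rule pf_det[of _ "d1 + d2"])
  fix i j assume ij: "i < d1 + d2" "j < d1 + d2"
  show "(\<lambda>p. sylvester_mat_sub d1 d2 (F p) (G p) $$ (i,j)) \<in> polyfun n"
    unfolding sylvester_mat_sub_index[OF ij]
    by (intro pf_if pf_coeff[OF F] pf_coeff[OF G] pf_const)
qed (rule sylvester_mat_sub_carrier)

lemma pf_pull_pr: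
  assumes "u \<in> polyfun m" "s + m \<le> n"
  shows "(\<lambda>p. u (pr s m (fst p), pr s m (snd p))) \<in> polyfun n"
  by (rule pf_pull[OF assms(1)]) (use assms(2) in \<open>auto simp: pr_def intro!: pf_var1' pf_var2'\<close>)

lemma sum_lessThan_add_split: "(\<Sum>k<a + b. f k) = (\<Sum>k<a. f k) + (\<Sum>k<b. f (a + k))" for f :: "nat \<Rightarrow> complex"
  by (induction b) (auto simp: add.assoc)

lemma coadj_dsum:
  "coadj_form (n1 + n2) (lie_dsum n1 c1 n2 c2) x =
   four_block_mat (coadj_form n1 c1 (pr 0 n1 x)) (0\<^sub>m n1 n2) (0\<^sub>m n2 n1) (coadj_form n2 c2 (pr n1 n2 x))"
proof (rule eq_matI)
  fix i j assume "i < dim_row (four_block_mat (coadj_form n1 c1 (pr 0 n1 x)) (0\<^sub>m n1 n2) (0\<^sub>m n2 n1) (coadj_form n2 c2 (pr n1 n2 x)))"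
    "j < dim_col (four_block_mat (coadj_form n1 c1 (pr 0 n1 x)) (0\<^sub>m n1 n2) (0\<^sub>m n2 n1) (coadj_form n2 c2 (pr n1 n2 x)))"
  then have ij: "i < n1 + n2" "j < n1 + n2" by auto
  have L: "coadj_form (n1 + n2) (lie_dsum n1 c1 n2 c2) x $$ (i,j) =
    (\<Sum>k<n1. x $ k * lie_dsum n1 c1 n2 c2 i j k) + (\<Sum>k<n2. x $ (n1 + k) * lie_dsum n1 c1 n2 c2 i j (n1 + k))"
    using ij by (simp add: coadj_entry sum_lessThan_add_split)
  show "coadj_form (n1 + n2) (lie_dsum n1 c1 n2 c2) x $$ (i,j) =
    four_block_mat (coadj_form n1 c1 (pr 0 n1 x)) (0\<^sub>m n1 n2) (0\<^sub>m n2 n1) (coadj_form n2 c2 (pr n1 n2 x)) $$ (i,j)"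
  proof (cases "i < n1")
    case True
    show ?thesis
    proof (cases "j < n1")
      case True
      have "(\<Sum>k<n2. x $ (n1 + k) * lie_dsum n1 c1 n2 c2 i j (n1 + k)) = 0"
        using \<open>i < n1\<close> by (intro sum.neutral) (auto simp: lie_dsum_def)
      moreover have "(\<Sum>k<n1. x $ k * lie_dsum n1 c1 n2 c2 i j k) = (\<Sum>k<n1. pr 0 n1 x $ k * c1 i j k)"
        using \<open>i < n1\<close> True by (intro sum.cong) (auto simp: lie_dsum_def pr_def)
      ultimately show ?thesis unfolding L using \<open>i < n1\<close> True ij by (simp add: coadj_entry)
    next
      case False
      have "(\<Sum>k<n2. x $ (n1 + k) * lie_dsum n1 c1 n2 c2 i j (n1 + k)) = 0"
        using \<open>i < n1\<close> by (intro sum.neutral) (auto simp: lie_dsum_def)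
      moreover have "(\<Sum>k<n1. x $ k * lie_dsum n1 c1 n2 c2 i j k) = 0"
        using \<open>i < n1\<close> False by (intro sum.neutral) (auto simp: lie_dsum_def)
      ultimately show ?thesis unfolding L using \<open>i < n1\<close> False ij by simp
    qed
  next
    case False
    show ?thesis
    proof (cases "j < n1")
      case True
      have "(\<Sum>k<n2. x $ (n1 + k) * lie_dsum n1 c1 n2 c2 i j (n1 + k)) = 0"
        using True by (intro sum.neutral) (auto simp: lie_dsum_def)
      moreover have "(\<Sum>k<n1. x $ k * lie_dsum n1 c1 n2 c2 i j k) = 0"
        using \<open>\<not> i < n1\<close> True by (intro sum.neutral) (auto simp: lie_dsum_def)
      ultimately show ?thesis unfolding L using \<open>\<not> i < n1\<close> True ij by simp
    next
      case False
      have "(\<Sum>k<n1. x $ k * lie_dsum n1 c1 n2 c2 i j k) = 0"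
        using \<open>\<not> i < n1\<close> by (intro sum.neutral) (auto simp: lie_dsum_def)
      moreover have "(\<Sum>k<n2. x $ (n1 + k) * lie_dsum n1 c1 n2 c2 i j (n1 + k)) = (\<Sum>k<n2. pr n1 n2 x $ k * c2 (i - n1) (j - n1) k)"
        using \<open>\<not> i < n1\<close> False ij by (intro sum.cong) (auto simp: lie_dsum_def pr_def)
      ultimately show ?thesis unfolding L using \<open>\<not> i < n1\<close> False ij by (simp add: coadj_entry)
    qed
  qed
qed auto

lemma pr_dim[simp]: "dim_vec (pr s m x) = m" by (simp add: pr_def)

lemma pr_app1: "dim_vec x = m \<Longrightarrow> pr 0 m (x @\<^sub>v y) = x"
  by (intro eq_vecI) (auto simp: pr_def)

lemma pr_app2: "dim_vec x = m \<Longrightarrow> dim_vec y = k \<Longrightarrow> pr m k (x @\<^sub>v y) = y"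
  by (intro eq_vecI) (auto simp: pr_def)

lemma setup_alg:
  assumes "JK_invariants m cc K J"
  shows "\<exists>G H y. G \<in> carrier_mat m (size K) \<and> H \<in> carrier_mat (size K) m \<and> dim_vec y = m \<and>
     det (coadj_form m cc y + G * H) \<noteq> 0"
proof -
  from assms obtain U where U: "zariski_open m U" "U \<noteq> {}"
    and T: "\<forall>(x,a)\<in>U. has_JK_type (coadj_form m cc x) (coadj_form m cc a) K J"
    unfolding JK_invariants_def by blast
  obtain x0 a0 where xa: "(x0, a0) \<in> U" using U(2) by auto
  then have dims: "dim_vec x0 = m" "dim_vec a0 = m" using U(1) unfolding zariski_open_def by auto
  from T xa obtain bl where bl: "JK_decomp (coadj_form m cc x0) (coadj_form m cc a0) bl" "kron_inv bl = K"
    unfolding has_JK_type_def by auto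
  have fin: "finite {\<mu>. \<exists>k. Jord \<mu> k \<in> set bl}"
  proof -
    have "{\<mu>. \<exists>k. Jord \<mu> k \<in> set bl} \<subseteq> (\<lambda>b. case b of Jord \<mu> k \<Rightarrow> \<mu> | _ \<Rightarrow> 0) ` set bl" by force
    then show ?thesis by (rule finite_subset) simp
  qed
  obtain lam0 where lam0: "lam0 \<notin> {\<mu>. \<exists>k. Jord \<mu> k \<in> set bl}"
    using ex_new_if_finite[OF infinite_UNIV_char_0 fin] by blast
  obtain G H where GH: "G \<in> carrier_mat m (size (kron_inv bl))" "H \<in> carrier_mat (size (kron_inv bl)) m"
    "det (coadj_form m cc x0 + (-lam0) \<cdot>\<^sub>m coadj_form m cc a0 + G * H) \<noteq> 0"
    using nonvanish[OF bl(1) coadj_carrier coadj_carrier, of lam0] lam0 by blast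
  define y where "y = vec m (\<lambda>i. x0 $ i + (-lam0) * a0 $ i)"
  have "coadj_form m cc y = coadj_form m cc x0 + (-lam0) \<cdot>\<^sub>m coadj_form m cc a0"
    unfolding y_def by (rule coadj_lin)
  then show ?thesis using GH bl(2) by (intro exI[of _ G] exI[of _ H] exI[of _ y]) (auto simp: y_def)
qed

lemma vanish_inf:
  fixes A B G H :: "complex mat"
  assumes JK: "JK_decomp A B bl" and A: "A \<in> carrier_mat n n" and B: "B \<in> carrier_mat n n"
    and inf: "JordInf k \<in> set bl"
    and G: "G \<in> carrier_mat n (size (kron_inv bl))" and H: "H \<in> carrier_mat (size (kron_inv bl)) n"
  shows "det (B + G * H) = 0"
proof -
  have "det (0 \<cdot>\<^sub>m A + 1 \<cdot>\<^sub>m B + G * H) = 0"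
    by (rule vanish_pair[OF JK A B _ _ G H refl]) (use inf in \<open>auto simp: sing_def intro!: bexI[of _ "JordInf k"]\<close>)
  moreover have "0 \<cdot>\<^sub>m A + 1 \<cdot>\<^sub>m B = B" using A B by (intro eq_matI) auto
  ultimately show ?thesis by simp
qed

lemma vanish_fin:
  fixes A B G H :: "complex mat"
  assumes JK: "JK_decomp A B bl" and A: "A \<in> carrier_mat n n" and B: "B \<in> carrier_mat n n"
    and jb: "Jord \<mu> k \<in> set bl"
    and G: "G \<in> carrier_mat n (size (kron_inv bl))" and H: "H \<in> carrier_mat (size (kron_inv bl)) n"
  shows "det (A + (-\<mu>) \<cdot>\<^sub>m B + G * H) = 0"
proof -
  have "det (1 \<cdot>\<^sub>m A + (-\<mu>) \<cdot>\<^sub>m B + G * H) = 0"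
    by (rule vanish_pair[OF JK A B _ _ G H refl]) (use jb in \<open>auto simp: sing_def intro!: bexI[of _ "Jord \<mu> k"]\<close>)
  then show ?thesis by (simp add: smult_one_mat')
qed

lemma res_common_root:
  fixes f g :: "complex poly"
  assumes f: "f \<noteq> 0" and r: "poly f \<mu> = 0" "poly g \<mu> = 0"
  shows "resultant f g = 0"
proof -
  have d: "[:-\<mu>, 1:] dvd f" "[:-\<mu>, 1:] dvd g" using r by (simp_all add: poly_eq_0_iff_dvd)
  then have "[:-\<mu>, 1:] dvd gcd f g" by simp
  moreover have "gcd f g \<noteq> 0" using f by simp
  ultimately have "degree [:-\<mu>, 1:] \<le> degree (gcd f g)" by (rule dvd_imp_degree_le)
  then have "degree (gcd f g) \<noteq> 0" by simp
  then show ?thesis using resultant_0_gcd by blast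
qed

lemma res_nonzero:
  fixes f g :: "complex poly"
  assumes f: "f \<noteq> 0" and nr: "\<And>z. poly f z = 0 \<Longrightarrow> poly g z \<noteq> 0"
  shows "resultant f g \<noteq> 0"
proof
  assume "resultant f g = 0"
  then have "degree (gcd f g) \<noteq> 0" using resultant_0_gcd by blast
  then have "\<not> constant (poly (gcd f g))" by (simp add: constant_degree)
  then obtain z where z: "poly (gcd f g) z = 0" using fundamental_theorem_of_algebra by blast
  have "poly f z = 0" using z by (metis dvd_trans gcd_dvd1 poly_eq_0_iff_dvd)
  moreover have "poly g z = 0" using z by (metis dvd_trans gcd_dvd2 poly_eq_0_iff_dvd)
  ultimately show False using nr by blast
qed

lemma Fpol_nz:
  assumes C: "C \<in> carrier_mat m m" and d: "det (coadj_form m cc y + C) \<noteq> 0"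
  shows "Fpol m cc C y (0\<^sub>v m) \<noteq> 0"
proof -
  have "coadj_form m cc y + (-0) \<cdot>\<^sub>m coadj_form m cc (0\<^sub>v m) + C = coadj_form m cc y + C"
    using C by (intro eq_matI) auto
  then have "poly (Fpol m cc C y (0\<^sub>v m)) 0 \<noteq> 0" using d Fpol_eval[OF C, of cc y "0\<^sub>v m" 0] by simp
  then show ?thesis by auto
qed

theorem theorem4:
  fixes n1 n2 :: nat and c1 c2 :: "nat \<Rightarrow> nat \<Rightarrow> nat \<Rightarrow> complex"
    and K1 K2 :: "nat multiset" and J1 J2 :: "nat multiset multiset"
  assumes "lie_alg n1 c1" and "lie_alg n2 c2"
    and "JK_invariants n1 c1 K1 J1" and "JK_invariants n2 c2 K2 J2"
  shows "JK_invariants (n1 + n2) (lie_dsum n1 c1 n2 c2) (K1 + K2) (J1 + J2)"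
proof -
  obtain G1 H1 y1 where GH1: "G1 \<in> carrier_mat n1 (size K1)" "H1 \<in> carrier_mat (size K1) n1" "dim_vec y1 = n1"
     "det (coadj_form n1 c1 y1 + G1 * H1) \<noteq> 0" using setup_alg[OF assms(3)] by blast
  obtain G2 H2 y2 where GH2: "G2 \<in> carrier_mat n2 (size K2)" "H2 \<in> carrier_mat (size K2) n2" "dim_vec y2 = n2"
     "det (coadj_form n2 c2 y2 + G2 * H2) \<noteq> 0" using setup_alg[OF assms(4)] by blast
  define C1 where "C1 = G1 * H1"
  define C2 where "C2 = G2 * H2"
  have C1: "C1 \<in> carrier_mat n1 n1" using GH1 by (simp add: C1_def)
  have C2: "C2 \<in> carrier_mat n2 n2" using GH2 by (simp add: C2_def)
  from assms(3) obtain U1 S1 where U1: "S1 \<subseteq> polyfun n1"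
      "U1 = {(x,a). dim_vec x = n1 \<and> dim_vec a = n1 \<and> (\<exists>f\<in>S1. f (x,a) \<noteq> 0)}" "U1 \<noteq> {}"
    and T1: "\<forall>(x,a)\<in>U1. has_JK_type (coadj_form n1 c1 x) (coadj_form n1 c1 a) K1 J1"
    unfolding JK_invariants_def zariski_open_def by blast
  from assms(4) obtain U2 S2 where U2: "S2 \<subseteq> polyfun n2"
      "U2 = {(x,a). dim_vec x = n2 \<and> dim_vec a = n2 \<and> (\<exists>f\<in>S2. f (x,a) \<noteq> 0)}" "U2 \<noteq> {}"
    and T2: "\<forall>(x,a)\<in>U2. has_JK_type (coadj_form n2 c2 x) (coadj_form n2 c2 a) K2 J2"
    unfolding JK_invariants_def zariski_open_def by blast
  define F1 where "F1 = (\<lambda>q. Fpol n1 c1 C1 (fst q) (snd q))"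
  define F2 where "F2 = (\<lambda>q. Fpol n2 c2 C2 (fst q) (snd q))"
  define D1 where "D1 = {degree (F1 q) | q. ptdim n1 q \<and> F1 q \<noteq> 0}"
  define D2 where "D2 = {degree (F2 q) | q. ptdim n2 q \<and> F2 q \<noteq> 0}"
  have D1fin: "finite D1"
    by (rule finite_subset[of _ "{..n1}"]) (auto simp: D1_def F1_def Fpol_degree)
  have D2fin: "finite D2"
    by (rule finite_subset[of _ "{..n2}"]) (auto simp: D2_def F2_def Fpol_degree)
  have D1ne: "D1 \<noteq> {}"
  proof -
    have "F1 (y1, 0\<^sub>v n1) \<noteq> 0" unfolding F1_def using Fpol_nz[OF C1] GH1(4) by (simp add: C1_def)
    moreover have "ptdim n1 (y1, 0\<^sub>v n1)" using GH1(3) by (simp add: ptdim_def)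
    ultimately show ?thesis unfolding D1_def by blast
  qed
  have D2ne: "D2 \<noteq> {}"
  proof -
    have "F2 (y2, 0\<^sub>v n2) \<noteq> 0" unfolding F2_def using Fpol_nz[OF C2] GH2(4) by (simp add: C2_def)
    moreover have "ptdim n2 (y2, 0\<^sub>v n2)" using GH2(3) by (simp add: ptdim_def)
    ultimately show ?thesis unfolding D2_def by blast
  qed
  define d1 where "d1 = Max D1"
  define d2 where "d2 = Max D2"
  obtain q1 where q1: "ptdim n1 q1" "F1 q1 \<noteq> 0" "degree (F1 q1) = d1"
    using Max_in[OF D1fin D1ne] unfolding d1_def D1_def by auto
  obtain q2 where q2: "ptdim n2 q2" "F2 q2 \<noteq> 0" "degree (F2 q2) = d2"
    using Max_in[OF D2fin D2ne] unfolding d2_def D2_def by auto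
  have deg1: "\<And>q. ptdim n1 q \<Longrightarrow> F1 q \<noteq> 0 \<Longrightarrow> degree (F1 q) \<le> d1"
    using Max_ge[OF D1fin] unfolding d1_def D1_def by blast
  have deg2: "\<And>q. ptdim n2 q \<Longrightarrow> F2 q \<noteq> 0 \<Longrightarrow> degree (F2 q) \<le> d2"
    using Max_ge[OF D2fin] unfolding d2_def D2_def by blast

  define N where "N = n1 + n2"
  define \<pi>1 where "\<pi>1 = (\<lambda>p::complex vec \<times> complex vec. (pr 0 n1 (fst p), pr 0 n1 (snd p)))"
  define \<pi>2 where "\<pi>2 = (\<lambda>p::complex vec \<times> complex vec. (pr n1 n2 (fst p), pr n1 n2 (snd p)))"
  define f1 where "f1 = (\<lambda>p. F1 (\<pi>1 p))"
  define f2 where "f2 = (\<lambda>p. F2 (\<pi>2 p))"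
  define g1 where "g1 = (\<lambda>p::complex vec \<times> complex vec. det (coadj_form n1 c1 (pr 0 n1 (snd p)) + C1))"
  define LR where "LR = (\<lambda>p. coeff (f1 p) d1 * (coeff (f2 p) d2 * det (sylvester_mat_sub d1 d2 (f1 p) (f2 p))))"
  define S where "S = {(\<lambda>p. u1 (\<pi>1 p) * u2 (\<pi>2 p) * (g1 p * LR p)) | u1 u2. u1 \<in> S1 \<and> u2 \<in> S2}"
  define U where "U = {(x,a). dim_vec x = N \<and> dim_vec a = N \<and> (\<exists>f\<in>S. f (x,a) \<noteq> 0)}"

  have PCf1: "PC N f1" unfolding f1_def F1_def \<pi>1_def N_def using PC_Fpol[of 0 n1 "n1 + n2" c1 C1] by simp
  have PCf2: "PC N f2" unfolding f2_def F2_def \<pi>2_def N_def using PC_Fpol[of n1 n2 "n1 + n2" c2 C2] by simp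
  have pfg1: "g1 \<in> polyfun N" unfolding g1_def N_def using pf_g[of 0 n1 "n1 + n2" C1 c1] C1 by simp
  have pfLR: "LR \<in> polyfun N"
    unfolding LR_def
    by (rule pf_mult[OF pf_coeff[OF PCf1] pf_mult[OF pf_coeff[OF PCf2] pf_res[OF PCf1 PCf2]]])
  have pfu1: "(\<lambda>p. u1 (\<pi>1 p)) \<in> polyfun N" if "u1 \<in> S1" for u1
    using pf_pull_pr[of u1 n1 0 N] U1(1) that unfolding \<pi>1_def N_def by auto
  have pfu2: "(\<lambda>p. u2 (\<pi>2 p)) \<in> polyfun N" if "u2 \<in> S2" for u2
    using pf_pull_pr[of u2 n2 n1 N] U2(1) that unfolding \<pi>2_def N_def by auto
  have Spf: "S \<subseteq> polyfun N"
    unfolding S_def using pfu1 pfu2 pfg1 pfLR by (auto intro!: pf_mult)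
  have zo: "zariski_open N U" unfolding zariski_open_def U_def using Spf by blast

  obtain x1 a1 u1 where xa1: "dim_vec x1 = n1" "dim_vec a1 = n1" "u1 \<in> S1" "u1 (x1, a1) \<noteq> 0"
    using U1(2,3) by blast
  obtain x2 a2 u2 where xa2: "dim_vec x2 = n2" "dim_vec a2 = n2" "u2 \<in> S2" "u2 (x2, a2) \<noteq> 0"
    using U2(2,3) by blast
  define P1 where "P1 = (x1 @\<^sub>v 0\<^sub>v n2, a1 @\<^sub>v 0\<^sub>v n2)"
  define P2 where "P2 = (0\<^sub>v n1 @\<^sub>v x2, 0\<^sub>v n1 @\<^sub>v a2)"
  define P3 where "P3 = (0\<^sub>v N :: complex vec, y1 @\<^sub>v 0\<^sub>v n2)"
  have P1: "ptdim N P1" "u1 (\<pi>1 P1) \<noteq> 0"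
    using xa1 by (auto simp: P1_def ptdim_def N_def \<pi>1_def pr_app1)
  have P2: "ptdim N P2" "u2 (\<pi>2 P2) \<noteq> 0"
    using xa2 by (auto simp: P2_def ptdim_def N_def \<pi>2_def pr_app2)
  have P3: "ptdim N P3" "g1 P3 \<noteq> 0"
    using GH1 by (auto simp: P3_def ptdim_def N_def g1_def pr_app1 C1_def)
  obtain P4 where P4: "ptdim N P4" "LR P4 \<noteq> 0"
  proof -
    obtain x1q a1q where q1e: "q1 = (x1q, a1q)" by (cases q1)
    obtain x2q a2q where q2e: "q2 = (x2q, a2q)" by (cases q2)
    have dq: "dim_vec x1q = n1" "dim_vec a1q = n1" "dim_vec x2q = n2" "dim_vec a2q = n2"
      using q1(1) q2(1) by (auto simp: q1e q2e ptdim_def)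
    define \<phi> where "\<phi> = F1 q1"
    define \<psi> where "\<psi> = F2 q2"
    define Z1 where "Z1 = {z. poly \<phi> z = 0}"
    define Z2 where "Z2 = {z. poly \<psi> z = 0}"
    have Zfin: "finite Z1" "finite Z2" unfolding Z1_def Z2_def \<phi>_def \<psi>_def
      using poly_roots_finite q1(2) q2(2) by auto
    define Bad where "Bad = (\<lambda>(z1, z2). z2 - z1) ` (Z1 \<times> Z2)"
    have "finite Bad" unfolding Bad_def using Zfin by simp
    then obtain t where t: "t \<notin> Bad" using ex_new_if_finite[OF infinite_UNIV_char_0] by blast
    define x1' where "x1' = vec n1 (\<lambda>i. x1q $ i + t * a1q $ i)"
    define Q where "Q = (x1' @\<^sub>v x2q, a1q @\<^sub>v a2q)"
    have dx1': "dim_vec x1' = n1" by (simp add: x1'_def)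
    have pi1Q: "\<pi>1 Q = (x1', a1q)" unfolding Q_def \<pi>1_def using dx1' dq by (simp add: pr_app1)
    have pi2Q: "\<pi>2 Q = (x2q, a2q)" unfolding Q_def \<pi>2_def using dx1' dq by (simp add: pr_app2)
    have f1Q: "f1 Q = pcompose \<phi> [:-t, 1:]"
      unfolding f1_def pi1Q F1_def \<phi>_def q1e x1'_def using Fpol_shift[OF C1] by simp
    have f2Q: "f2 Q = \<psi>" unfolding f2_def pi2Q \<psi>_def q2e F2_def by simp
    have dphi: "degree \<phi> = d1" "\<phi> \<noteq> 0" using q1 by (auto simp: \<phi>_def)
    have dpsi: "degree \<psi> = d2" "\<psi> \<noteq> 0" using q2 by (auto simp: \<psi>_def)
    have degf1: "degree (f1 Q) = d1" unfolding f1Q using dphi by (simp add: degree_pcompose)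
    have lc1: "coeff (f1 Q) d1 \<noteq> 0"
    proof -
      have "lead_coeff (pcompose \<phi> [:-t, 1:]) = lead_coeff \<phi> * lead_coeff [:-t, 1:] ^ degree \<phi>"
        by (rule lead_coeff_comp) simp
      then have "coeff (f1 Q) d1 = lead_coeff \<phi>" using degf1 unfolding f1Q by simp
      then show ?thesis using dphi leading_coeff_0_iff[of \<phi>] by metis
    qed
    have lc2: "coeff (f2 Q) d2 \<noteq> 0" unfolding f2Q using dpsi leading_coeff_0_iff[of \<psi>] by metis
    have f1nz: "f1 Q \<noteq> 0" using lc1 by auto
    have "resultant (f1 Q) (f2 Q) \<noteq> 0"
    proof (rule res_nonzero[OF f1nz])
      fix z assume "poly (f1 Q) z = 0"
      then have "poly \<phi> (z - t) = 0" unfolding f1Q by (simp add: poly_pcompose algebra_simps)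
      then have "z - t \<in> Z1" by (simp add: Z1_def)
      show "poly (f2 Q) z \<noteq> 0"
      proof
        assume "poly (f2 Q) z = 0"
        then have "z \<in> Z2" unfolding f2Q Z2_def by simp
        then have "z - (z - t) \<in> Bad" unfolding Bad_def using \<open>z - t \<in> Z1\<close> by force
        then show False using t by simp
      qed
    qed
    moreover have "det (sylvester_mat_sub d1 d2 (f1 Q) (f2 Q)) = resultant (f1 Q) (f2 Q)"
      unfolding resultant_def sylvester_mat_def using degf1 f2Q dpsi by simp
    ultimately have "LR Q \<noteq> 0" unfolding LR_def using lc1 lc2 by simp
    moreover have "ptdim N Q" unfolding Q_def ptdim_def N_def using dx1' dq by simp
    ultimately show ?thesis using that by blast
  qed
  have Une: "U \<noteq> {}"
  proof -
    have pf1: "(\<lambda>p. u1 (\<pi>1 p)) \<in> polyfun N" by (rule pfu1[OF xa1(3)])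
    have pf2: "(\<lambda>p. u2 (\<pi>2 p)) \<in> polyfun N" by (rule pfu2[OF xa2(3)])
    obtain p where p: "ptdim N p" "u1 (\<pi>1 p) \<noteq> 0" "u2 (\<pi>2 p) \<noteq> 0"
      using pf_prod_nz[OF pf1 pf2 P1 P2] by blast
    have pf12: "(\<lambda>p. u1 (\<pi>1 p) * u2 (\<pi>2 p)) \<in> polyfun N" by (rule pf_mult[OF pf1 pf2])
    obtain p' where p': "ptdim N p'" "u1 (\<pi>1 p') * u2 (\<pi>2 p') \<noteq> 0" "g1 p' \<noteq> 0"
      using pf_prod_nz[OF pf12 pfg1, of p P3] p P3 by auto
    have pf123: "(\<lambda>p. u1 (\<pi>1 p) * u2 (\<pi>2 p) * g1 p) \<in> polyfun N" by (rule pf_mult[OF pf12 pfg1])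
    obtain p'' where p'': "ptdim N p''" "u1 (\<pi>1 p'') * u2 (\<pi>2 p'') * g1 p'' \<noteq> 0" "LR p'' \<noteq> 0"
      using pf_prod_nz[OF pf123 pfLR, of p' P4] p' P4 by auto
    have mem: "(\<lambda>p. u1 (\<pi>1 p) * u2 (\<pi>2 p) * (g1 p * LR p)) \<in> S" unfolding S_def using xa1(3) xa2(3) by blast
    have nz: "(\<lambda>p. u1 (\<pi>1 p) * u2 (\<pi>2 p) * (g1 p * LR p)) (fst p'', snd p'') \<noteq> 0" using p'' by simp
    have ex: "\<exists>f\<in>S. f (fst p'', snd p'') \<noteq> 0"
      by (rule bexI[of "\<lambda>f. f (fst p'', snd p'') \<noteq> 0" "\<lambda>p. u1 (\<pi>1 p) * u2 (\<pi>2 p) * (g1 p * LR p)", OF nz mem])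
    have "dim_vec (fst p'') = N \<and> dim_vec (snd p'') = N \<and> (\<exists>f\<in>S. f (fst p'', snd p'') \<noteq> 0)"
      using p''(1) ex unfolding ptdim_def by simp
    then have "(fst p'', snd p'') \<in> U" unfolding U_def by (cases "p''") simp
    then show ?thesis by blast
  qed

  have typU: "\<forall>(x,a)\<in>U. has_JK_type (coadj_form N (lie_dsum n1 c1 n2 c2) x) (coadj_form N (lie_dsum n1 c1 n2 c2) a) (K1 + K2) (J1 + J2)"
  proof (clarify)
    fix x a assume xa: "(x, a) \<in> U"
    then obtain u1 u2 where xaN: "dim_vec x = N" "dim_vec a = N" and us: "u1 \<in> S1" "u2 \<in> S2"
      and nz: "u1 (\<pi>1 (x,a)) * u2 (\<pi>2 (x,a)) * (g1 (x,a) * LR (x,a)) \<noteq> 0"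
      unfolding U_def S_def by auto
    define X1 where "X1 = pr 0 n1 x"
    define A1 where "A1 = pr 0 n1 a"
    define X2 where "X2 = pr n1 n2 x"
    define A2 where "A2 = pr n1 n2 a"
    have "(X1, A1) \<in> U1" unfolding U1(2) X1_def A1_def using us nz by (auto simp: \<pi>1_def)
    then obtain bl1 where bl1: "JK_decomp (coadj_form n1 c1 X1) (coadj_form n1 c1 A1) bl1"
      "kron_inv bl1 = K1" "jord_inv bl1 = J1"
      using T1 unfolding has_JK_type_def by blast
    have "(X2, A2) \<in> U2" unfolding U2(2) X2_def A2_def using us nz by (auto simp: \<pi>2_def)
    then obtain bl2 where bl2: "JK_decomp (coadj_form n2 c2 X2) (coadj_form n2 c2 A2) bl2"
      "kron_inv bl2 = K2" "jord_inv bl2 = J2"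
      using T2 unfolding has_JK_type_def by blast
    have JK: "JK_decomp (coadj_form N (lie_dsum n1 c1 n2 c2) x) (coadj_form N (lie_dsum n1 c1 n2 c2) a) (bl1 @ bl2)"
      unfolding N_def coadj_dsum X1_def[symmetric] A1_def[symmetric] X2_def[symmetric] A2_def[symmetric]
      by (rule JK_append[OF bl1(1) bl2(1)]) (simp_all add: coadj_carrier)
    have g1nz: "g1 (x,a) \<noteq> 0" and LRnz: "LR (x,a) \<noteq> 0" using nz by auto
    have G1': "G1 \<in> carrier_mat n1 (size (kron_inv bl1))" "H1 \<in> carrier_mat (size (kron_inv bl1)) n1"
      using GH1 bl1(2) by auto
    have G2': "G2 \<in> carrier_mat n2 (size (kron_inv bl2))" "H2 \<in> carrier_mat (size (kron_inv bl2)) n2"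
      using GH2 bl2(2) by auto
    have noinf: "\<And>k. JordInf k \<notin> set bl1"
    proof
      fix k assume "JordInf k \<in> set bl1"
      from vanish_inf[OF bl1(1) coadj_carrier coadj_carrier this G1'] have "det (coadj_form n1 c1 A1 + G1 * H1) = 0" .
      then show False using g1nz by (simp add: g1_def A1_def C1_def)
    qed
    have nocommon: "False" if j1: "Jord \<mu> k1 \<in> set bl1" and j2: "Jord \<mu> k2 \<in> set bl2" for \<mu> k1 k2
    proof -
      have r1: "poly (f1 (x,a)) \<mu> = 0"
        unfolding f1_def F1_def \<pi>1_def using vanish_fin[OF bl1(1) coadj_carrier coadj_carrier j1 G1']
        by (simp add: Fpol_eval[OF C1[unfolded C1_def]] C1_def X1_def A1_def)
      have r2: "poly (f2 (x,a)) \<mu> = 0"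
        unfolding f2_def F2_def \<pi>2_def using vanish_fin[OF bl2(1) coadj_carrier coadj_carrier j2 G2']
        by (simp add: Fpol_eval[OF C2[unfolded C2_def]] C2_def X2_def A2_def)
      have lc1: "coeff (f1 (x,a)) d1 \<noteq> 0" and lc2: "coeff (f2 (x,a)) d2 \<noteq> 0" using LRnz by (auto simp: LR_def)
      then have f1nz: "f1 (x,a) \<noteq> 0" and f2nz: "f2 (x,a) \<noteq> 0" by auto
      have "degree (f1 (x,a)) \<le> d1" unfolding f1_def
        by (rule deg1) (use f1nz in \<open>auto simp: ptdim_def \<pi>1_def f1_def\<close>)
      moreover have "d1 \<le> degree (f1 (x,a))" using lc1 by (rule le_degree)
      ultimately have e1: "degree (f1 (x,a)) = d1" by simp
      have "degree (f2 (x,a)) \<le> d2" unfolding f2_def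
        by (rule deg2) (use f2nz in \<open>auto simp: ptdim_def \<pi>2_def f2_def\<close>)
      moreover have "d2 \<le> degree (f2 (x,a))" using lc2 by (rule le_degree)
      ultimately have e2: "degree (f2 (x,a)) = d2" by simp
      have "det (sylvester_mat_sub d1 d2 (f1 (x,a)) (f2 (x,a))) = resultant (f1 (x,a)) (f2 (x,a))"
        unfolding resultant_def sylvester_mat_def e1 e2 ..
      also have "\<dots> = 0" by (rule res_common_root[OF f1nz r1 r2])
      finally show False using LRnz by (simp add: LR_def)
    qed
    have disj: "jord_ev b1 \<noteq> jord_ev b2"
      if "b1 \<in> set bl1" "b2 \<in> set bl2" "jord_ev b1 \<noteq> None" for b1 b2
    proof (cases b1)
      case (Kron k) then show ?thesis using that by simp
    next
      case (JordInf k) then show ?thesis using that noinf by blast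
    next
      case (Jord \<mu> k)
      show ?thesis
      proof
        assume "jord_ev b1 = jord_ev b2"
        then obtain k2 where "b2 = Jord \<mu> k2" using Jord by (cases b2) auto
        then show False using nocommon[of \<mu> k] that Jord by blast
      qed
    qed
    show "has_JK_type (coadj_form N (lie_dsum n1 c1 n2 c2) x) (coadj_form N (lie_dsum n1 c1 n2 c2) a) (K1 + K2) (J1 + J2)"
      unfolding has_JK_type_def
      using JK kron_inv_append[of bl1 bl2] jord_inv_append[of bl1 bl2, OF disj] bl1 bl2 by auto
  qed
  show ?thesis unfolding JK_invariants_def using zo Une typU unfolding N_def by blast
qed

end
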